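(* Let $\zeta$, $C$, $M$, $X$, $Y$ be as in the context, and for real $s$ let $$\alpha(s)=a_0(s)^2(2h(s)-\kappa(s))+b_0(s)^2(2\overline{h(s)}-\overline{\kappa(s)}).$$ Then the condition $X^o(\lambda=1)=0$ (vanishing of the off-diagonal part of $X$ at $\lambda=1$) is equivalent to $$\int_0^p\alpha(t)\,dt=0,$$ and the condition $Y^d(\lambda=1)=0$ (vanishing of the diagonal part of $Y$ at $\lambda=1$) is equivalent to $$\int_0^p\Im\left(\alpha(t)\int_0^t\overline{\alpha(s)}\,ds\right)dt=\int_0^p\Im\left(a_0(t)\overline{b_0(t)}\kappa(t)\right)dt.$$
   Context: Let $p>0$ and $\mathbb D\subset\mathbb C$ a connected open set containing $\mathbb R$, invariant under $z\mapsto\bar z$ and $z\mapsto z+p$. Let $a_0,b_0:\mathbb D\to\mathbb C$ be holomorphic, $p$-periodic, with $a_0(z)\overline{a_0(\bar z)}-b_0(z)\overline{b_0(\bar z)}=1$, $a_0(0)=1$, $b_0(0)=0$, and $C_0(z)=\begin{pmatrix}a_0(z)&b_0(z)\\ \overline{b_0(\bar z)}&\overline{a_0(\bar z)}\end{pmatrix}$. Write $C_0^{-1}\partial_zC_0=\begin{pmatrix}\nu&\kappa\\ \overline{\kappa(\bar z)}&-\nu\end{pmatrix}$, so $\kappa(z)=\overline{a_0(\bar z)}\partial_zb_0(z)-b_0(z)\partial_z\overline{a_0(\bar z)}$. Let $h$ be a $p$-periodic meromorphic function on $\mathbb D$ without poles on $\mathbb R$ and $$\zeta(z,\lambda)=\begin{pmatrix}\nu(z)&\lambda^{-1}h(z)+\lambda(\kappa(z)-h(z))\\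 \lambda^{-1}(\overline{\kappa(\bar z)}-\overline{h(\bar z)})+\lambda\overline{h(\bar z)}&-\nu(z)\end{pmatrix}dz.$$ Let $C(z,\lambda)$ solve $dC=C\zeta$, $C(0,\lambda)=\operatorname{id}$, let $M(\lambda)=C(p,\lambda)$, $X(\lambda)=-i\lambda(\partial_\lambda M)M^{-1}$, $Y(\lambda)=-\frac12\lambda\partial_\lambda(\lambda(\partial_\lambda M)M^{-1})$. *)

theory Defs
  imports "HOL-Complex_Analysis.Complex_Analysis"
begin

definition refl_fun :: "(complex \<Rightarrow> complex) \<Rightarrow> complex \<Rightarrow> complex" where
  "refl_fun f z = cnj (f (cnj z))"

text \<open>Entries of C0^{-1} dC0 = [[nu, kappa],[kappa^*, -nu]] (using det C0 = 1).\<close>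
definition kappa :: "(complex \<Rightarrow> complex) \<Rightarrow> (complex \<Rightarrow> complex) \<Rightarrow> complex \<Rightarrow> complex" where
  "kappa a0 b0 z = refl_fun a0 z * deriv b0 z - b0 z * deriv (refl_fun a0) z"

definition nu :: "(complex \<Rightarrow> complex) \<Rightarrow> (complex \<Rightarrow> complex) \<Rightarrow> complex \<Rightarrow> complex" where
  "nu a0 b0 z = refl_fun a0 z * deriv a0 z - b0 z * deriv (refl_fun b0) z"

text \<open>The coefficient matrix of the 1-form zeta (coefficient of dz).\<close>
definition zeta :: "(complex \<Rightarrow> complex) \<Rightarrow> (complex \<Rightarrow> complex) \<Rightarrow> (complex \<Rightarrow> complex)
    \<Rightarrow> complex \<Rightarrow> complex \<Rightarrow> complex^2^2" where
  "zeta a0 b0 h z l = (\<chi> i j.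
     if i = 1 \<and> j = 1 then nu a0 b0 z
     else if i = 1 \<and> j = 2 then inverse l * h z + l * (kappa a0 b0 z - h z)
     else if i = 2 \<and> j = 1 then inverse l * (refl_fun (kappa a0 b0) z - refl_fun h z) + l * refl_fun h z
     else - nu a0 b0 z)"

definition mderiv :: "(complex \<Rightarrow> complex^2^2) \<Rightarrow> complex \<Rightarrow> complex^2^2" where
  "mderiv F l = (\<chi> i j. deriv (\<lambda>m. F m $ i $ j) l)"

definition Xmat :: "(complex \<Rightarrow> complex^2^2) \<Rightarrow> complex \<Rightarrow> complex^2^2" where
  "Xmat M l = (\<chi> i j. (- \<i> * l) * (mderiv M l ** matrix_inv (M l)) $ i $ j)"

definition Ymat :: "(complex \<Rightarrow> complex^2^2) \<Rightarrow> complex \<Rightarrow> complex^2^2" where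
  "Ymat M l = (\<chi> i j. (- (1/2) * l) *
      mderiv (\<lambda>m. \<chi> r s. m * (mderiv M m ** matrix_inv (M m)) $ r $ s) l $ i $ j)"

definition alpha :: "(complex \<Rightarrow> complex) \<Rightarrow> (complex \<Rightarrow> complex) \<Rightarrow> (complex \<Rightarrow> complex) \<Rightarrow> real \<Rightarrow> complex" where
  "alpha a0 b0 h s = (a0 (of_real s))\<^sup>2 * (2 * h (of_real s) - kappa a0 b0 (of_real s))
     + (b0 (of_real s))\<^sup>2 * (2 * cnj (h (of_real s)) - cnj (kappa a0 b0 (of_real s)))"

end

theory Submission
  imports Defs
begin

no_notation fps_nth (infixl \<open>$\<close> 75)






type_synonym m2 = "complex^2^2"

lemma m2_eqI: "A $ 1 $ 1 = B $ 1 $ 1 \<Longrightarrow> A $ 1 $ 2 = B $ 1 $ 2 \<Longrightarrow> A $ 2 $ 1 = B $ 2 $ 1 \<Longrightarrow> A $ 2 $ 2 = B $ 2 $ 2 \<Longrightarrow> (A::m2) = B"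
  by (simp add: vec_eq_iff forall_2)

lemma mm_nth[simp]: "((A::m2) ** B) $ i $ j = A $ i $ 1 * B $ 1 $ j + A $ i $ 2 * B $ 2 $ j"
  by (simp add: matrix_matrix_mult_def sum_2)

lemma mat_nth2[simp]: "(mat c :: m2) $ 1 $ 1 = c" "(mat c :: m2) $ 2 $ 2 = c" "(mat c :: m2) $ 1 $ 2 = 0" "(mat c :: m2) $ 2 $ 1 = 0"
  by (simp_all add: mat_def)

lemma norm_vec_le_l1: "norm (x::'a::real_normed_vector^'n) \<le> (\<Sum>i\<in>UNIV. norm (x$i))"
  by (simp add: norm_vec_def L2_set_le_sum)

lemma norm_m2_le: "norm (A::m2) \<le> norm (A$1$1) + norm (A$1$2) + norm (A$2$1) + norm (A$2$2)"
proof -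
  have "norm A \<le> norm (A$1) + norm (A$2)" using norm_vec_le_l1[of A] by (simp add: sum_2)
  moreover have "norm (A$1) \<le> norm (A$1$1) + norm (A$1$2)" using norm_vec_le_l1[of "A$1"] by (simp add: sum_2)
  moreover have "norm (A$2) \<le> norm (A$2$1) + norm (A$2$2)" using norm_vec_le_l1[of "A$2"] by (simp add: sum_2)
  ultimately show ?thesis by linarith
qed

lemma nth_le_m2: "norm ((A::m2) $ i $ j) \<le> norm A"
  proof -
  have "norm (A$i$j) \<le> norm (A$i)" by (rule Finite_Cartesian_Product.norm_nth_le)
  also have "norm (A$i) \<le> norm A" by (rule Finite_Cartesian_Product.norm_nth_le)
  finally show ?thesis .
qed

lemma mm_norm_le: "norm ((a::m2) ** (b::m2)) \<le> norm a * norm b * 8"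
proof -
  have e: "norm ((a ** b)$i$j) \<le> 2 * (norm a * norm b)" for i j
  proof -
    have "norm ((a ** b)$i$j) \<le> norm (a$i$1) * norm (b$1$j) + norm (a$i$2) * norm (b$2$j)"
      by (simp add: norm_mult[symmetric] norm_triangle_ineq)
    also have "\<dots> \<le> norm a * norm b + norm a * norm b"
      using nth_le_m2 by (intro add_mono mult_mono) auto
    finally show ?thesis by simp
  qed
  have "norm (a ** b) \<le> 4 * (2 * (norm a * norm b))"
    using norm_m2_le[of "a ** b"] e[of 1 1] e[of 1 2] e[of 2 1] e[of 2 2] by linarith
  then show ?thesis by simp
qed

lemma bb_mm: "bounded_bilinear ((**) :: m2 \<Rightarrow> m2 \<Rightarrow> m2)"
proof
  fix a a' b b' :: m2 and r :: real
  show "(a + a') ** b = a ** b + a' ** b" by (rule m2_eqI) (simp_all add: algebra_simps)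
  show "a ** (b + b') = a ** b + a ** b'" by (rule m2_eqI) (simp_all add: algebra_simps)
  show "(r *\<^sub>R a) ** b = r *\<^sub>R (a ** b)" by (rule m2_eqI) (simp_all add: algebra_simps)
  show "a ** (r *\<^sub>R b) = r *\<^sub>R (a ** b)" by (rule m2_eqI) (simp_all add: algebra_simps)
next
  show "\<exists>K. \<forall>(a::m2) (b::m2). norm (a ** b) \<le> norm a * norm b * K"
    using mm_norm_le by blast
qed


lemma vec_has_vector_derivativeI:
  fixes f :: "real \<Rightarrow> 'a::real_normed_vector^'n"
  assumes "\<And>i. ((\<lambda>x. f x $ i) has_vector_derivative D $ i) F"
  shows "(f has_vector_derivative D) F"
proof -
  have "bounded_linear (\<lambda>h. h *\<^sub>R D)" by (rule bounded_linear_scaleR_left)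
  moreover have "((\<lambda>y. (f y - f (Lim F (\<lambda>x. x)) - (y - Lim F (\<lambda>x. x)) *\<^sub>R D) /\<^sub>R norm (y - Lim F (\<lambda>x. x))) \<longlongrightarrow> 0) F"
  proof (rule vec_tendstoI)
    fix i
    from assms[of i] have "((\<lambda>y. (f y $ i - f (Lim F (\<lambda>x. x)) $ i - (y - Lim F (\<lambda>x. x)) *\<^sub>R D $ i) /\<^sub>R norm (y - Lim F (\<lambda>x. x))) \<longlongrightarrow> 0) F"
      unfolding has_vector_derivative_def has_derivative_def by simp
    then show "((\<lambda>y. ((f y - f (Lim F (\<lambda>x. x)) - (y - Lim F (\<lambda>x. x)) *\<^sub>R D) /\<^sub>R norm (y - Lim F (\<lambda>x. x))) $ i) \<longlongrightarrow> 0 $ i) F"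
      by simp
  qed
  ultimately show ?thesis unfolding has_vector_derivative_def has_derivative_def by blast
qed

lemma m2_has_vector_derivativeI:
  fixes f :: "real \<Rightarrow> m2"
  assumes "\<And>i j. ((\<lambda>x. f x $ i $ j) has_vector_derivative D $ i $ j) F"
  shows "(f has_vector_derivative D) F"
  by (intro vec_has_vector_derivativeI assms)

lemma bl_m2_nth: "bounded_linear (\<lambda>A::m2. A $ i $ j)"
  by (rule bounded_linear_intro[where K=1]) (auto simp: nth_le_m2)

lemma m2_nth_has_vector_derivative:
  fixes f :: "real \<Rightarrow> m2"
  assumes "(f has_vector_derivative D) F"
  shows "((\<lambda>x. f x $ i $ j) has_vector_derivative D $ i $ j) F"
proof -
  from bounded_linear.has_vector_derivative[OF bl_m2_nth assms] show ?thesis .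
qed


definition adj2 :: "m2 \<Rightarrow> m2" where
  "adj2 A = (\<chi> i j. if i = 1 then (if j = 1 then A$2$2 else - A$1$2) else (if j = 1 then - A$2$1 else A$1$1))"

definition det2 :: "m2 \<Rightarrow> complex" where
  "det2 A = A$1$1 * A$2$2 - A$1$2 * A$2$1"

definition tr2 :: "m2 \<Rightarrow> complex" where
  "tr2 A = A$1$1 + A$2$2"

definition sc :: "complex \<Rightarrow> m2 \<Rightarrow> m2" where
  "sc c A = (\<chi> i j. c * A$i$j)"

lemma two_neq[simp]: "(2::2) \<noteq> 1" "(1::2) \<noteq> 2"
  by (simp_all add: eq_commute)

lemma adj2_nth[simp]: "adj2 A $ 1 $ 1 = A$2$2" "adj2 A $ 1 $ 2 = - A$1$2" "adj2 A $ 2 $ 1 = - A$2$1" "adj2 A $ 2 $ 2 = A$1$1"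
  by (simp_all add: adj2_def)

lemma sc_nth[simp]: "sc c A $ i $ j = c * A $ i $ j"
  by (simp add: sc_def)

lemma m2_add_nth[simp]: "((A::m2) + B) $ i $ j = A$i$j + B$i$j" and m2_diff_nth[simp]: "((A::m2) - B) $ i $ j = A$i$j - B$i$j"
  and m2_uminus_nth[simp]: "(- (A::m2)) $ i $ j = - A$i$j" and m2_zero_nth[simp]: "(0::m2) $ i $ j = 0"
  by simp_all

lemma mm_adj2: "A ** adj2 A = mat (det2 A)" and adj2_mm: "adj2 A ** A = mat (det2 A)"
  by (rule m2_eqI; simp add: det2_def algebra_simps)+

lemma adj2_mult: "adj2 ((A::m2) ** B) = adj2 B ** adj2 A"
  by (rule m2_eqI; simp add: algebra_simps)

lemma adj2_traceless: "tr2 A = 0 \<Longrightarrow> adj2 A = - A"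
  by (rule m2_eqI; simp add: tr2_def algebra_simps add_eq_0_iff)

lemma bl_adj2: "bounded_linear adj2"
proof -
  have "adj2 = (\<lambda>A. (\<chi> i j. if i = 1 then (if j = 1 then A$2$2 else - A$1$2) else (if j = 1 then - A$2$1 else A$1$1)))"
    by (simp add: adj2_def fun_eq_iff)
  show ?thesis
  proof (rule bounded_linear_intro[where K=4])
    fix x y :: m2 and r :: real
    show "adj2 (x + y) = adj2 x + adj2 y" by (rule m2_eqI; simp)
    show "adj2 (r *\<^sub>R x) = r *\<^sub>R adj2 x" by (rule m2_eqI; simp)
    show "norm (adj2 x) \<le> norm x * 4"
      using norm_m2_le[of "adj2 x"] nth_le_m2[of x 1 1] nth_le_m2[of x 1 2] nth_le_m2[of x 2 1] nth_le_m2[of x 2 2]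
      by simp
  qed
qed

lemma norm_vec_scale: "norm (\<chi> i. c * (x::complex^'n) $ i) = cmod c * norm x"
  by (simp add: norm_vec_def norm_mult L2_set_right_distrib)

lemma norm_sc: "norm (sc c A) = cmod c * norm A"
proof -
  have "sc c A = (\<chi> i. (\<chi> j. c * A $ i $ j))" by (simp add: sc_def)
  also have "norm \<dots> = L2_set (\<lambda>i. cmod c * norm (A $ i)) UNIV"
    by (simp add: norm_vec_def[of "\<chi> i. (\<chi> j. c * A $ i $ j)"] norm_vec_scale)
  also have "\<dots> = cmod c * norm A" by (simp add: norm_vec_def L2_set_right_distrib)
  finally show ?thesis .
qed

lemma bl_sc: "bounded_linear (sc c)"
  by (rule bounded_linear_intro[where K="cmod c"]) (auto intro!: m2_eqI simp: norm_sc algebra_simps)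

lemma sc_pull: "sc c A ** B = sc c (A ** B)" "A ** sc c B = sc c (A ** B)"
  by (rule m2_eqI; simp add: algebra_simps)+

lemma sc_simps: "sc a (sc b A) = sc (a * b) A" "sc 1 A = A" "sc c (A + B) = sc c A + sc c B" "sc c (A - B) = sc c A - sc c B"
  "sc (a + b) A = sc a A + sc b A" "sc (a - b) A = sc a A - sc b A" "sc 0 A = 0" "sc c 0 = 0"
  "sc c (- A) = - sc c A" "sc (- c) A = - sc c A" "adj2 (sc c A) = sc c (adj2 A)"
  by (rule m2_eqI; simp add: algebra_simps)+

lemma adj2_simps: "adj2 (A + B) = adj2 A + adj2 B" "adj2 (A - B) = adj2 A - adj2 B" "adj2 (- A) = - adj2 A"
  "adj2 (mat 1) = mat 1" "adj2 0 = 0"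
  by (rule m2_eqI; simp)+

lemma mm_simps: "(A::m2) ** (B + C) = A ** B + A ** C" "((A::m2) + B) ** C = A ** C + B ** C"
  "(A::m2) ** (B - C) = A ** B - A ** C" "((A::m2) - B) ** C = A ** C - B ** C"
  "(A::m2) ** (- B) = - (A ** B)" "(- (A::m2)) ** B = - (A ** B)" "(A::m2) ** (0::m2) = 0" "(0::m2) ** (A::m2) = 0"
  by (rule m2_eqI; simp add: algebra_simps)+

lemma tr2_simps: "tr2 (A + B) = tr2 A + tr2 B" "tr2 (sc c A) = c * tr2 A" "tr2 (A - B) = tr2 A - tr2 B" "tr2 (-A) = - tr2 A"
  by (simp_all add: tr2_def algebra_simps)






definition Zf :: "(real \<Rightarrow> m2) \<Rightarrow> (real \<Rightarrow> m2) \<Rightarrow> (real \<Rightarrow> m2) \<Rightarrow> real \<Rightarrow> complex \<Rightarrow> m2" where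
  "Zf E F G t l = E t + sc l (F t) + sc (inverse l) (G t)"

definition Wf :: "(real \<Rightarrow> m2) \<Rightarrow> (real \<Rightarrow> m2) \<Rightarrow> real \<Rightarrow> complex \<Rightarrow> complex \<Rightarrow> m2" where
  "Wf F G t l m = F t - sc (inverse (l * m)) (G t)"

lemma has_vector_derivative_mm:
  fixes f g :: "real \<Rightarrow> m2"
  assumes "(f has_vector_derivative f') (at x within s)" "(g has_vector_derivative g') (at x within s)"
  shows "((\<lambda>x. (f x :: m2) ** g x) has_vector_derivative (f x ** g' + f' ** g x)) (at x within s)"
  by (rule bounded_bilinear.has_vector_derivative[OF bb_mm assms])

lemma continuous_on_mm[continuous_intros]:
  fixes f g :: "'a::topological_space \<Rightarrow> m2"
  shows "continuous_on S f \<Longrightarrow> continuous_on S g \<Longrightarrow> continuous_on S (\<lambda>x. (f x :: m2) ** g x)"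
  by (rule bounded_bilinear.continuous_on[OF bb_mm])

lemma continuous_on_sc[continuous_intros]:
  "continuous_on S f \<Longrightarrow> continuous_on S (\<lambda>x. sc c (f x))"
  by (rule bounded_linear.continuous_on[OF bl_sc])

lemma continuous_on_adj2[continuous_intros]:
  "continuous_on S f \<Longrightarrow> continuous_on S (\<lambda>x. adj2 (f x))"
  by (rule bounded_linear.continuous_on[OF bl_adj2])

locale ode2 =
  fixes p :: real and E F G :: "real \<Rightarrow> m2" and C :: "real \<Rightarrow> complex \<Rightarrow> m2"
  assumes p_pos: "p > 0"
    and contE: "continuous_on UNIV E" and contF: "continuous_on UNIV F" and contG: "continuous_on UNIV G"
    and trE: "\<And>t. tr2 (E t) = 0" and trF: "\<And>t. tr2 (F t) = 0" and trG: "\<And>t. tr2 (G t) = 0"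
    and C_0: "\<And>l. l \<noteq> 0 \<Longrightarrow> C 0 l = mat 1"
    and C_deriv: "\<And>l t. l \<noteq> 0 \<Longrightarrow> ((\<lambda>s. C s l) has_vector_derivative (C t l ** Zf E F G t l)) (at t)"
begin

abbreviation "Z \<equiv> Zf E F G"
abbreviation "W \<equiv> Wf F G"

lemma Z_diff: "l \<noteq> 0 \<Longrightarrow> m \<noteq> 0 \<Longrightarrow> Z t l - Z t m = sc (l - m) (W t l m)"
  by (rule m2_eqI; simp add: Zf_def Wf_def field_simps)

lemma trZ: "tr2 (Z t l) = 0"
  by (simp add: Zf_def tr2_simps trE trF trG)

lemma contE': "continuous_on S E" and contF': "continuous_on S F" and contG': "continuous_on S G"
  using contE contF contG continuous_on_subset by blast+

lemma contZ: "continuous_on S (\<lambda>s. Z s l)"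
  unfolding Zf_def by (intro continuous_intros contE' contF' contG')

lemma contW: "continuous_on S (\<lambda>s. W s l m)"
  unfolding Wf_def by (intro continuous_intros contE' contF' contG')

lemma contC: "l \<noteq> 0 \<Longrightarrow> continuous_on S (\<lambda>s. C s l)"
  by (rule continuous_on_vector_derivative[of S _ "\<lambda>t. C t l ** Z t l"])
     (auto intro: has_vector_derivative_at_within C_deriv)

lemma det_C: assumes "l \<noteq> 0" shows "det2 (C t l) = 1"
proof -
  have d: "((\<lambda>s. C s l $ i $ j) has_vector_derivative (C x l ** Z x l) $ i $ j) (at x)" for i j x
    by (rule m2_nth_has_vector_derivative[OF C_deriv[OF assms]])
  have "((\<lambda>s. det2 (C s l)) has_vector_derivative 0) (at x within UNIV)" for x
  proof -
    have "((\<lambda>s. C s l $ 1 $ 1 * C s l $ 2 $ 2 - C s l $ 1 $ 2 * C s l $ 2 $ 1) has_vector_derivative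
       (C x l $ 1 $ 1 * (C x l ** Z x l) $ 2 $ 2 + (C x l ** Z x l) $ 1 $ 1 * C x l $ 2 $ 2)
       - (C x l $ 1 $ 2 * (C x l ** Z x l) $ 2 $ 1 + (C x l ** Z x l) $ 1 $ 2 * C x l $ 2 $ 1)) (at x)"
      by (intro has_vector_derivative_diff has_vector_derivative_mult d)
    moreover have "Z x l $ 2 $ 2 = - Z x l $ 1 $ 1" using trZ[of x l] by (simp add: tr2_def add_eq_0_iff)
    ultimately show ?thesis by (simp add: det2_def algebra_simps)
  qed
  then obtain c where "\<And>x. x \<in> UNIV \<Longrightarrow> det2 (C x l) = c"
    using has_vector_derivative_zero_constant[of UNIV "\<lambda>s. det2 (C s l)"] by auto
  then have "det2 (C t l) = det2 (C 0 l)" by simp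
  then show ?thesis using C_0[OF assms] by (simp add: det2_def)
qed

lemma C_adj: "l \<noteq> 0 \<Longrightarrow> C t l ** adj2 (C t l) = mat 1" and adj_C: "l \<noteq> 0 \<Longrightarrow> adj2 (C t l) ** C t l = mat 1"
  using det_C by (simp_all add: mm_adj2 adj2_mm)

lemma adjC_deriv: assumes "l \<noteq> 0"
  shows "((\<lambda>s. adj2 (C s l)) has_vector_derivative (- (Z t l ** adj2 (C t l)))) (at t)"
proof -
  have "((\<lambda>s. adj2 (C s l)) has_vector_derivative adj2 (C t l ** Z t l)) (at t)"
    by (rule bounded_linear.has_vector_derivative[OF bl_adj2 C_deriv[OF assms]])
  moreover have "adj2 (C t l ** Z t l) = - (Z t l ** adj2 (C t l))"
    by (simp add: adj2_mult adj2_traceless[OF trZ] mm_simps)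
  ultimately show ?thesis by simp
qed

end





lemma mm3_norm_le: "norm ((A::m2) ** (B::m2) ** (D::m2)) \<le> 64 * (norm A * norm B * norm D)"
proof -
  have "norm (A ** B ** D) \<le> norm (A ** B) * norm D * 8" by (rule mm_norm_le)
  also have "\<dots> \<le> (norm A * norm B * 8) * norm D * 8"
    by (intro mult_right_mono mm_norm_le) auto
  finally show ?thesis by (simp add: algebra_simps)
qed

lemma cont_bound:
  fixes f :: "real \<Rightarrow> 'a::real_normed_vector"
  assumes "continuous_on {a..b} f"
  obtains B where "B \<ge> 0" "\<And>s. s \<in> {a..b} \<Longrightarrow> norm (f s) \<le> B"
proof -
  have "compact (f ` {a..b})" by (rule compact_continuous_image[OF assms compact_Icc])
  then obtain B where "B > 0" "\<And>x. x \<in> f ` {a..b} \<Longrightarrow> norm x \<le> B"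
    using compact_imp_bounded bounded_pos by metis
  then show ?thesis using that[of B] by auto
qed

lemma LipU:
  assumes "\<delta> > 0" "\<And>l s. l \<noteq> m \<Longrightarrow> dist l m < \<delta> \<Longrightarrow> s \<in> S \<Longrightarrow> dist (f l s) (g s) \<le> K * dist l m"
  shows "uniform_limit S f g (at m)"
proof (rule uniform_limitI)
  fix e :: real assume e: "e > 0"
  define d where "d = min \<delta> (e / (\<bar>K\<bar> + 1))"
  have d: "d > 0" using e assms(1) by (simp add: d_def)
  have "\<exists>d>0. \<forall>l. 0 < dist l m \<and> dist l m < d \<longrightarrow> (\<forall>s\<in>S. dist (f l s) (g s) < e)"
  proof (intro exI[of _ d] conjI d allI impI ballI)
    fix l s assume l: "0 < dist l m \<and> dist l m < d" and s: "s \<in> S"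
    have "dist (f l s) (g s) \<le> K * dist l m" using assms(2)[of l s] l s by (simp add: d_def)
    also have "\<dots> \<le> (\<bar>K\<bar> + 1) * dist l m" using l by (intro mult_right_mono) auto
    also have "\<dots> < (\<bar>K\<bar> + 1) * (e / (\<bar>K\<bar> + 1))"
      using l by (intro mult_strict_left_mono) (auto simp: d_def)
    also have "\<dots> = e" by simp
    finally show "dist (f l s) (g s) < e" .
  qed
  then show "\<forall>\<^sub>F l in at m. \<forall>s\<in>S. dist (f l s) (g s) < e"
    by (simp add: eventually_at)
qed

context ode2
begin

definition Iint :: "real \<Rightarrow> complex \<Rightarrow> complex \<Rightarrow> m2" where
  "Iint t l m = integral {0..t} (\<lambda>s. C s l ** W s l m ** adj2 (C s m))"

lemma cont_integrand: "l \<noteq> 0 \<Longrightarrow> m \<noteq> 0 \<Longrightarrow> continuous_on S (\<lambda>s. C s l ** W s l m ** adj2 (C s m))"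
  by (intro continuous_intros contC contW)

lemma var_id:
  assumes l: "l \<noteq> 0" and m: "m \<noteq> 0" and t: "0 \<le> t"
  shows "C t l - C t m = sc (l - m) (Iint t l m ** C t m)"
proof -
  define R where "R s = C s l ** adj2 (C s m)" for s
  have Rd: "(R has_vector_derivative (C s l ** (Z s l - Z s m) ** adj2 (C s m))) (at s within {0..t})" for s
  proof -
    have "(R has_vector_derivative (C s l ** (- (Z s m ** adj2 (C s m))) + C s l ** Z s l ** adj2 (C s m))) (at s)"
      unfolding R_def by (intro has_vector_derivative_mm C_deriv adjC_deriv l m)
    moreover have "C s l ** (- (Z s m ** adj2 (C s m))) + C s l ** Z s l ** adj2 (C s m)
        = C s l ** (Z s l - Z s m) ** adj2 (C s m)"
      by (simp add: mm_simps matrix_mul_assoc)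
    ultimately show ?thesis by (simp add: has_vector_derivative_at_within)
  qed
  have "((\<lambda>s. C s l ** (Z s l - Z s m) ** adj2 (C s m)) has_integral (R t - R 0)) {0..t}"
    by (rule fundamental_theorem_of_calculus[OF t Rd])
  moreover have "(\<lambda>s. C s l ** (Z s l - Z s m) ** adj2 (C s m)) = (\<lambda>s. sc (l - m) (C s l ** W s l m ** adj2 (C s m)))"
    by (simp add: Z_diff l m sc_pull)
  ultimately have "integral {0..t} (\<lambda>s. sc (l - m) (C s l ** W s l m ** adj2 (C s m))) = R t - R 0"
    by (simp add: integral_unique)
  moreover have "integral {0..t} (\<lambda>s. sc (l - m) (C s l ** W s l m ** adj2 (C s m))) = sc (l - m) (Iint t l m)"
    unfolding Iint_def
    using integral_linear[OF integrable_continuous_interval[OF cont_integrand[OF l m]] bl_sc]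
    by (simp add: o_def)
  moreover have "R 0 = mat 1" using C_0[OF l] C_0[OF m] by (simp add: R_def adj2_simps)
  ultimately have Rt: "R t = mat 1 + sc (l - m) (Iint t l m)" by (simp add: algebra_simps)
  have "C t l = R t ** C t m" unfolding R_def
    by (simp add: matrix_mul_assoc[symmetric] adj_C[OF m])
  also have "\<dots> = C t m + sc (l - m) (Iint t l m ** C t m)"
    by (simp add: Rt mm_simps sc_pull)
  finally show ?thesis by simp
qed

end





lemma cmod_half: "cmod (l - m) \<le> cmod m / 2 \<Longrightarrow> cmod l \<ge> cmod m / 2"
  using norm_triangle_ineq2[of m l] by (simp add: norm_minus_commute)

context ode2
begin

lemma W_bound:
  assumes m: "m \<noteq> 0"
  obtains BW where "BW \<ge> 0" "\<And>l l' s. cmod (l - m) \<le> cmod m / 2 \<Longrightarrow> cmod (l' - m) \<le> cmod m / 2 \<Longrightarrow> s \<in> {0..p} \<Longrightarrow> norm (W s l l') \<le> BW"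
proof -
  obtain BF where BF: "BF \<ge> 0" "\<And>s. s \<in> {0..p} \<Longrightarrow> norm (F s) \<le> BF" using cont_bound[OF contF'] by blast
  obtain BG where BG: "BG \<ge> 0" "\<And>s. s \<in> {0..p} \<Longrightarrow> norm (G s) \<le> BG" using cont_bound[OF contG'] by blast
  have mpos: "cmod m > 0" using m by simp
  show ?thesis
  proof (rule that[of "BF + 4 / (cmod m)^2 * BG"])
    show "0 \<le> BF + 4 / (cmod m)\<^sup>2 * BG" using BF BG by simp
    fix l l' s assume l: "cmod (l - m) \<le> cmod m / 2" and l': "cmod (l' - m) \<le> cmod m / 2" and s: "s \<in> {0..p}"
    have "cmod l \<ge> cmod m / 2" "cmod l' \<ge> cmod m / 2" using cmod_half l l' by auto
    then have "cmod l * cmod l' \<ge> (cmod m / 2) * (cmod m / 2)"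
      using mpos by (intro mult_mono) auto
    then have "inverse (cmod l * cmod l') \<le> inverse ((cmod m / 2) * (cmod m / 2))"
      using mpos by (intro le_imp_inverse_le) auto
    moreover have "cmod (inverse (l * l')) = inverse (cmod l * cmod l')" by (simp add: norm_inverse norm_mult)
    moreover have "inverse ((cmod m / 2) * (cmod m / 2)) = 4 / (cmod m)^2" by (simp add: power2_eq_square)
    ultimately have i: "cmod (inverse (l * l')) \<le> 4 / (cmod m)^2" by simp
    have "norm (W s l l') \<le> norm (F s) + cmod (inverse (l * l')) * norm (G s)"
      unfolding Wf_def using norm_triangle_ineq4[of "F s" "sc (inverse (l * l')) (G s)"] by (simp add: norm_sc)
    also have "\<dots> \<le> BF + 4 / (cmod m)^2 * BG"
      using BF(2)[OF s] BG(2)[OF s] i by (intro add_mono mult_mono) auto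
    finally show "norm (W s l l') \<le> BF + 4 / (cmod m)\<^sup>2 * BG" .
  qed
qed

lemma integrand_bound:
  assumes "l \<noteq> 0" "m \<noteq> 0" "0 \<le> t" "t \<le> p" "\<And>s. s \<in> {0..t} \<Longrightarrow> norm (C s l ** W s l m ** adj2 (C s m)) \<le> B"
  shows "norm (Iint t l m) \<le> B * p"
proof -
  have "norm (Iint t l m) \<le> B * (t - 0)"
    unfolding Iint_def by (rule integral_bound) (use assms cont_integrand in auto)
  also have "\<dots> \<le> B * p"
  proof (cases "B \<ge> 0")
    case True then show ?thesis using assms by (intro mult_left_mono) auto
  next
    case False
    have "0 \<le> norm (C 0 l ** W 0 l m ** adj2 (C 0 m))" by simp
    also have "\<dots> \<le> B" using assms(5)[of 0] assms(3) by auto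
    finally show ?thesis using False by simp
  qed
  finally show ?thesis .
qed

lemma C_bound:
  assumes m: "m \<noteq> 0"
  obtains \<delta> K where "\<delta> > 0" "\<delta> \<le> cmod m / 2" "K \<ge> 0" "\<And>l s. cmod (l - m) < \<delta> \<Longrightarrow> s \<in> {0..p} \<Longrightarrow> norm (C s l) \<le> K"
proof -
  obtain BC where BC: "BC \<ge> 0" "\<And>s. s \<in> {0..p} \<Longrightarrow> norm (C s m) \<le> BC" using cont_bound[OF contC[OF m]] by blast
  obtain BA where BA: "BA \<ge> 0" "\<And>s. s \<in> {0..p} \<Longrightarrow> norm (adj2 (C s m)) \<le> BA"
    using cont_bound[OF continuous_on_adj2[OF contC[OF m]]] by blast
  obtain BW where BW: "BW \<ge> 0" "\<And>l l' s. cmod (l - m) \<le> cmod m / 2 \<Longrightarrow> cmod (l' - m) \<le> cmod m / 2 \<Longrightarrow> s \<in> {0..p} \<Longrightarrow> norm (W s l l') \<le> BW"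
    using W_bound[OF m] by blast
  define Q where "Q = 512 * p * BW * BA * BC + 1"
  have "0 \<le> 512 * p * BW * BA * BC" using BC BA BW p_pos by (intro mult_nonneg_nonneg) auto
  then have Q: "Q > 0" and Q1: "Q \<ge> 1" unfolding Q_def by linarith+
  define \<delta> where "\<delta> = min (cmod m / 2) (1 / (2 * Q))"
  have \<delta>: "\<delta> > 0" using m Q by (simp add: \<delta>_def)
  show ?thesis
  proof (rule that[of \<delta> "2 * BC"])
    show "\<delta> > 0" "\<delta> \<le> cmod m / 2" "0 \<le> 2 * BC" using \<delta> BC by (auto simp: \<delta>_def)
    fix l s assume l: "cmod (l - m) < \<delta>" and s: "s \<in> {0..p}"
    have lm: "cmod (l - m) \<le> cmod m / 2" using l by (simp add: \<delta>_def)
    then have l0: "l \<noteq> 0" using m cmod_half[OF lm] by auto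
    have mm: "cmod (m - m) \<le> cmod m / 2" by simp
    obtain s0 where s0: "s0 \<in> {0..p}" "\<And>t. t \<in> {0..p} \<Longrightarrow> norm (C t l) \<le> norm (C s0 l)"
    proof -
      have "continuous_on {0..p} (\<lambda>t. norm (C t l))" by (intro continuous_on_norm contC[OF l0])
      then have "\<exists>x\<in>{0..p}. \<forall>y\<in>{0..p}. norm (C y l) \<le> norm (C x l)"
        using continuous_attains_sup[of "{0..p}" "\<lambda>t. norm (C t l)"] p_pos by auto
      then show ?thesis using that by blast
    qed
    define N where "N = norm (C s0 l)"
    have N0: "N \<ge> 0" by (simp add: N_def)
    have key: "norm (C t l) \<le> BC + N / 2" if t: "t \<in> {0..p}" for t
    proof -
      have ib: "norm (Iint t l m) \<le> (64 * (N * BW * BA)) * p"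
      proof (rule integrand_bound[OF l0 m])
        show "0 \<le> t" "t \<le> p" using t by auto
        fix s assume s: "s \<in> {0..t}"
        then have s': "s \<in> {0..p}" using t by auto
        have "norm (C s l ** W s l m ** adj2 (C s m)) \<le> 64 * (norm (C s l) * norm (W s l m) * norm (adj2 (C s m)))"
          by (rule mm3_norm_le)
        also have "\<dots> \<le> 64 * (N * BW * BA)"
          using s0(2)[OF s'] BW(2)[OF lm mm s'] BA(2)[OF s'] N0 BW(1)
          by (intro mult_left_mono mult_mono) (auto simp: N_def)
        finally show "norm (C s l ** W s l m ** adj2 (C s m)) \<le> 64 * (N * BW * BA)" .
      qed
      have "norm (C t l) \<le> norm (C t m) + norm (C t l - C t m)"
        using norm_triangle_ineq[of "C t m" "C t l - C t m"] by simp
      also have "norm (C t l - C t m) = cmod (l - m) * norm (Iint t l m ** C t m)"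
        using var_id[OF l0 m] t by (simp add: norm_sc)
      also have "norm (Iint t l m ** C t m) \<le> norm (Iint t l m) * norm (C t m) * 8" by (rule mm_norm_le)
      also have "\<dots> \<le> ((64 * (N * BW * BA)) * p) * BC * 8"
        using ib BC(2)[OF t] BA(1) BW(1) N0 p_pos by (intro mult_right_mono mult_mono) auto
      also have "((64 * (N * BW * BA)) * p) * BC * 8 = N * (Q - 1)" by (simp add: Q_def algebra_simps)
      also have "cmod (l - m) * (N * (Q - 1)) \<le> N / 2"
      proof -
        have "cmod (l - m) * (N * (Q - 1)) \<le> (1 / (2 * Q)) * (N * Q)"
          using l Q Q1 N0 by (intro mult_mono) (auto simp: \<delta>_def)
        also have "\<dots> = N / 2" using Q by simp
        finally show ?thesis .
      qed
      finally show ?thesis using BC(2)[OF t] by (simp add: mult_left_mono) 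
    qed
    have "N \<le> BC + N / 2" using key[OF s0(1)] by (simp add: N_def)
    then have "N \<le> 2 * BC" by simp
    then show "norm (C s l) \<le> 2 * BC" using s0(2)[OF s] by (simp add: N_def)
  qed
qed

end





lemma LipU':
  assumes "\<delta> > 0" "\<And>l s. cmod (l - m) < \<delta> \<Longrightarrow> s \<in> S \<Longrightarrow> norm (f l s - g s) \<le> L * cmod (l - m)"
  shows "uniform_limit S f g (at m)"
  by (rule LipU[OF assms(1)]) (use assms(2) in \<open>auto simp: dist_norm\<close>)

lemma int_bound:
  fixes f :: "real \<Rightarrow> 'a::banach"
  assumes "0 \<le> t" "t \<le> p" "B \<ge> 0" "continuous_on {0..t} f" "\<And>s. s \<in> {0..t} \<Longrightarrow> norm (f s) \<le> B"
  shows "norm (integral {0..t} f) \<le> B * p"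
proof -
  have "norm (integral {0..t} f) \<le> B * (t - 0)"
    by (rule integral_bound) (use assms in auto)
  also have "\<dots> \<le> B * p" using assms by (intro mult_left_mono) auto
  finally show ?thesis .
qed

context ode2
begin

lemma Lip_bounds:
  assumes m: "m \<noteq> 0"
  obtains \<delta> K L1 L2 where "\<delta> > 0" "\<delta> \<le> cmod m / 2" "K \<ge> 0"
    "\<And>l s. cmod (l - m) < \<delta> \<Longrightarrow> s \<in> {0..p} \<Longrightarrow> norm (C s l) \<le> K"
    "\<And>l s. cmod (l - m) < \<delta> \<Longrightarrow> s \<in> {0..p} \<Longrightarrow> norm (C s l - C s m) \<le> L1 * cmod (l - m)"
    "\<And>l s. cmod (l - m) < \<delta> \<Longrightarrow> s \<in> {0..p} \<Longrightarrow> norm (Iint s l m - Iint s m m) \<le> L2 * cmod (l - m)"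
proof -
  obtain \<delta> K where dK: "\<delta> > 0" "\<delta> \<le> cmod m / 2" "K \<ge> 0" "\<And>l s. cmod (l - m) < \<delta> \<Longrightarrow> s \<in> {0..p} \<Longrightarrow> norm (C s l) \<le> K"
    using C_bound[OF m] by blast
  obtain BC where BC: "BC \<ge> 0" "\<And>s. s \<in> {0..p} \<Longrightarrow> norm (C s m) \<le> BC" using cont_bound[OF contC[OF m]] by blast
  obtain BA where BA: "BA \<ge> 0" "\<And>s. s \<in> {0..p} \<Longrightarrow> norm (adj2 (C s m)) \<le> BA"
    using cont_bound[OF continuous_on_adj2[OF contC[OF m]]] by blast
  obtain BW where BW: "BW \<ge> 0" "\<And>l l' s. cmod (l - m) \<le> cmod m / 2 \<Longrightarrow> cmod (l' - m) \<le> cmod m / 2 \<Longrightarrow> s \<in> {0..p} \<Longrightarrow> norm (W s l l') \<le> BW"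
    using W_bound[OF m] by blast
  obtain BG where BG: "BG \<ge> 0" "\<And>s. s \<in> {0..p} \<Longrightarrow> norm (G s) \<le> BG" using cont_bound[OF contG'] by blast
  have mpos: "cmod m > 0" using m by simp
  define L1 where "L1 = 8 * (64 * K * BW * BA * p) * BC"
  define L2 where "L2 = (64 * L1 * BW * BA + 64 * BC * (2 / cmod m ^ 3 * BG) * BA) * p"
  have mm: "cmod (m - m) \<le> cmod m / 2" by simp
  have L1nn: "L1 \<ge> 0" unfolding L1_def using dK(3) BW(1) BA(1) BC(1) p_pos by simp
  have L1: "norm (C s l - C s m) \<le> L1 * cmod (l - m)" if l: "cmod (l - m) < \<delta>" and s: "s \<in> {0..p}" for l s
  proof -
    have lm: "cmod (l - m) \<le> cmod m / 2" using l dK by simp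
    then have l0: "l \<noteq> 0" using m cmod_half[OF lm] by auto
    have ib: "norm (Iint s l m) \<le> (64 * (K * BW * BA)) * p"
      unfolding Iint_def
    proof (rule int_bound)
      show "0 \<le> s" "s \<le> p" using s by auto
      show "0 \<le> 64 * (K * BW * BA)" using dK BW BA by simp
      show "continuous_on {0..s} (\<lambda>s. C s l ** W s l m ** adj2 (C s m))" by (rule cont_integrand[OF l0 m])
      fix u assume u: "u \<in> {0..s}"
      then have u': "u \<in> {0..p}" using s by auto
      have "norm (C u l ** W u l m ** adj2 (C u m)) \<le> 64 * (norm (C u l) * norm (W u l m) * norm (adj2 (C u m)))"
        by (rule mm3_norm_le)
      also have "\<dots> \<le> 64 * (K * BW * BA)"
        using dK(4)[OF l u'] BW(2)[OF lm mm u'] BA(2)[OF u'] dK(3) BW(1)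
        by (intro mult_left_mono mult_mono) auto
      finally show "norm (C u l ** W u l m ** adj2 (C u m)) \<le> 64 * (K * BW * BA)" .
    qed
    have "norm (C s l - C s m) = cmod (l - m) * norm (Iint s l m ** C s m)"
      using var_id[OF l0 m] s by (simp add: norm_sc)
    also have "norm (Iint s l m ** C s m) \<le> norm (Iint s l m) * norm (C s m) * 8" by (rule mm_norm_le)
    also have "\<dots> \<le> ((64 * (K * BW * BA)) * p) * BC * 8"
      using ib BC(2)[OF s] BA(1) BW(1) dK(3) p_pos by (intro mult_right_mono mult_mono) auto
    finally have "norm (C s l - C s m) \<le> cmod (l - m) * (((64 * (K * BW * BA)) * p) * BC * 8)"
      by (simp add: mult_left_mono)
    then show ?thesis by (simp add: L1_def algebra_simps)
  qed
  have L2: "norm (Iint s l m - Iint s m m) \<le> L2 * cmod (l - m)" if l: "cmod (l - m) < \<delta>" and s: "s \<in> {0..p}" for l s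
  proof -
    have lm: "cmod (l - m) \<le> cmod m / 2" using l dK by simp
    then have l0: "l \<noteq> 0" using m cmod_half[OF lm] by auto
    have lhalf: "cmod l \<ge> cmod m / 2" using cmod_half[OF lm] .
    have Wd: "W u l m - W u m m = sc ((l - m) * inverse (l * m * m)) (G u)" for u
      unfolding Wf_def by (rule m2_eqI; simp add: field_simps m l0)
    have ci: "cmod (inverse (l * m * m)) \<le> 2 / cmod m ^ 3"
    proof -
      have "(cmod m / 2) * (cmod m * cmod m) \<le> cmod l * (cmod m * cmod m)"
        using lhalf by (intro mult_right_mono) auto
      then have "inverse (cmod l * (cmod m * cmod m)) \<le> inverse ((cmod m / 2) * (cmod m * cmod m))"
        using mpos by (intro le_imp_inverse_le) auto
      also have "\<dots> = 2 / cmod m ^ 3" by (simp add: power3_eq_cube)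
      finally show ?thesis by (simp add: norm_inverse norm_mult mult.assoc)
    qed
    have eq: "Iint s l m - Iint s m m = integral {0..s} (\<lambda>u. (C u l - C u m) ** W u l m ** adj2 (C u m) + C u m ** sc ((l - m) * inverse (l * m * m)) (G u) ** adj2 (C u m))"
    proof -
      have "Iint s l m - Iint s m m = integral {0..s} (\<lambda>u. C u l ** W u l m ** adj2 (C u m) - C u m ** W u m m ** adj2 (C u m))"
        unfolding Iint_def
        by (rule integral_diff[symmetric]; rule integrable_continuous_interval; rule cont_integrand; use l0 m in simp)
      also have "\<dots> = integral {0..s} (\<lambda>u. (C u l - C u m) ** W u l m ** adj2 (C u m) + C u m ** sc ((l - m) * inverse (l * m * m)) (G u) ** adj2 (C u m))"
      proof (rule integral_cong)
        fix u
        have Wd': "W u m m = W u l m - sc ((l - m) * inverse (l * m * m)) (G u)" using Wd[of u] by (simp add: algebra_simps)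
        show "C u l ** W u l m ** adj2 (C u m) - C u m ** W u m m ** adj2 (C u m) = (C u l - C u m) ** W u l m ** adj2 (C u m) + C u m ** sc ((l - m) * inverse (l * m * m)) (G u) ** adj2 (C u m)"
          unfolding Wd' by (simp add: mm_simps algebra_simps)
      qed
      finally show ?thesis .
    qed
    have "norm (Iint s l m - Iint s m m) \<le> (cmod (l - m) * (64 * L1 * BW * BA + 64 * BC * (2 / cmod m ^ 3 * BG) * BA)) * p"
      unfolding eq
    proof (rule int_bound)
      show "0 \<le> s" "s \<le> p" using s by auto
      show "0 \<le> cmod (l - m) * (64 * L1 * BW * BA + 64 * BC * (2 / cmod m ^ 3 * BG) * BA)"
        using dK BW BA BC BG p_pos by (simp add: L1_def)
      show "continuous_on {0..s} (\<lambda>u. (C u l - C u m) ** W u l m ** adj2 (C u m) + C u m ** sc ((l - m) * inverse (l * m * m)) (G u) ** adj2 (C u m))"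
        by (intro continuous_intros contC contW contG' l0 m)
      fix u assume u: "u \<in> {0..s}"
      then have u': "u \<in> {0..p}" using s by auto
      have n1: "norm ((C u l - C u m) ** W u l m ** adj2 (C u m)) \<le> 64 * ((L1 * cmod (l - m)) * BW * BA)"
      proof -
        have "norm ((C u l - C u m) ** W u l m ** adj2 (C u m)) \<le> 64 * (norm (C u l - C u m) * norm (W u l m) * norm (adj2 (C u m)))"
          by (rule mm3_norm_le)
        also have "\<dots> \<le> 64 * ((L1 * cmod (l - m)) * BW * BA)"
          using L1[OF l u'] BW(2)[OF lm mm u'] BA(2)[OF u'] BW(1) dK(3) L1nn
          by (intro mult_left_mono mult_mono) auto
        finally show ?thesis .
      qed
      have n2: "norm (C u m ** sc ((l - m) * inverse (l * m * m)) (G u) ** adj2 (C u m)) \<le> 64 * (BC * (cmod (l - m) * (2 / cmod m ^ 3) * BG) * BA)"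
      proof -
        have "norm (C u m ** sc ((l - m) * inverse (l * m * m)) (G u) ** adj2 (C u m)) \<le> 64 * (norm (C u m) * norm (sc ((l - m) * inverse (l * m * m)) (G u)) * norm (adj2 (C u m)))"
          by (rule mm3_norm_le)
        also have "norm (sc ((l - m) * inverse (l * m * m)) (G u)) = cmod (l - m) * cmod (inverse (l * m * m)) * norm (G u)"
          by (simp add: norm_sc norm_mult)
        also have "64 * (norm (C u m) * (cmod (l - m) * cmod (inverse (l * m * m)) * norm (G u)) * norm (adj2 (C u m))) \<le> 64 * (BC * (cmod (l - m) * (2 / cmod m ^ 3) * BG) * BA)"
          using BC(2)[OF u'] BG(2)[OF u'] BA(2)[OF u'] ci BC(1) BG(1)
          by (intro mult_left_mono mult_mono) auto
        finally show ?thesis .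
      qed
      show "norm ((C u l - C u m) ** W u l m ** adj2 (C u m) + C u m ** sc ((l - m) * inverse (l * m * m)) (G u) ** adj2 (C u m)) \<le> cmod (l - m) * (64 * L1 * BW * BA + 64 * BC * (2 / cmod m ^ 3 * BG) * BA)"
        using norm_triangle_le[OF add_mono[OF n1 n2]] by (simp add: algebra_simps)
    qed
    then show ?thesis by (simp add: L2_def algebra_simps)
  qed
  show ?thesis by (rule that[OF dK(1-4) L1 L2])
qed

lemma unif_C: assumes m: "m \<noteq> 0" shows "uniform_limit {0..p} (\<lambda>l s. C s l) (\<lambda>s. C s m) (at m)"
proof -
  obtain \<delta> L1 where "\<delta> > 0" "\<And>l s. cmod (l - m) < \<delta> \<Longrightarrow> s \<in> {0..p} \<Longrightarrow> norm (C s l - C s m) \<le> L1 * cmod (l - m)"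
    using Lip_bounds[OF m] by metis
  then show ?thesis by (rule LipU')
qed

lemma unif_I: assumes m: "m \<noteq> 0" shows "uniform_limit {0..p} (\<lambda>l s. Iint s l m) (\<lambda>s. Iint s m m) (at m)"
proof -
  obtain \<delta> L2 where "\<delta> > 0" "\<And>l s. cmod (l - m) < \<delta> \<Longrightarrow> s \<in> {0..p} \<Longrightarrow> norm (Iint s l m - Iint s m m) \<le> L2 * cmod (l - m)"
    using Lip_bounds[OF m] by metis
  then show ?thesis by (rule LipU')
qed

lemma near_nonzero: fixes m :: complex assumes m: "m \<noteq> 0" shows "\<forall>\<^sub>F l in at m. l \<noteq> 0 \<and> l \<noteq> m"
proof -
  have "\<exists>d>0. \<forall>l. 0 < dist l m \<and> dist l m < d \<longrightarrow> l \<noteq> 0 \<and> l \<noteq> m"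
    using m by (intro exI[of _ "cmod m"]) (auto simp: dist_norm)
  then show ?thesis by (simp add: eventually_at)
qed

lemma dC:
  assumes m: "m \<noteq> 0" and t: "t \<in> {0..p}"
  shows "((\<lambda>l. C t l $ i $ j) has_field_derivative (Iint t m m ** C t m) $ i $ j) (at m)"
  unfolding has_field_derivative_iff
proof -
  have "((\<lambda>l. Iint t l m) \<longlongrightarrow> Iint t m m) (at m)" by (rule tendsto_uniform_limitI[OF unif_I[OF m] t])
  then have lim: "((\<lambda>l. (Iint t l m ** C t m) $ i $ j) \<longlongrightarrow> (Iint t m m ** C t m) $ i $ j) (at m)"
    by (intro tendsto_vec_nth bounded_bilinear.tendsto[OF bb_mm] tendsto_const)
  have ev: "\<forall>\<^sub>F l in at m. (Iint t l m ** C t m) $ i $ j = (C t l $ i $ j - C t m $ i $ j) / (l - m)"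
    using near_nonzero[OF m]
  proof (rule eventually_mono)
    fix l assume l: "l \<noteq> 0 \<and> l \<noteq> m"
    have "C t l $ i $ j - C t m $ i $ j = (l - m) * (Iint t l m ** C t m) $ i $ j"
      using arg_cong[OF var_id[of l m t], of "\<lambda>A. A $ i $ j"] l m t by simp
    then show "(Iint t l m ** C t m) $ i $ j = (C t l $ i $ j - C t m $ i $ j) / (l - m)"
      using l by simp
  qed
  show "((\<lambda>y. (C t y $ i $ j - C t m $ i $ j) / (y - m)) \<longlongrightarrow> (Iint t m m ** C t m) $ i $ j) (at m)"
    by (rule Lim_transform_eventually[OF lim ev])
qed

end





lemma m2_scaleR_nth[simp]: "(r *\<^sub>R (A::m2)) $ i $ j = of_real r * A $ i $ j"
  unfolding vector_scaleR_component by (simp add: scaleR_conv_of_real)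

lemma bb_sc: "bounded_bilinear sc"
proof
  fix a a' :: complex and b b' :: m2 and r :: real
  show "sc (a + a') b = sc a b + sc a' b" "sc a (b + b') = sc a b + sc a b'"
    "sc (r *\<^sub>R a) b = r *\<^sub>R sc a b" "sc a (r *\<^sub>R b) = r *\<^sub>R sc a b"
    by (rule m2_eqI; simp add: algebra_simps)+
next
  show "\<exists>K. \<forall>a b. norm (sc a b) \<le> norm a * norm b * K"
    by (rule exI[of _ 1]) (simp add: norm_sc)
qed

lemma uniform_limit_const_fun:
  assumes "(f \<longlongrightarrow> c) F"
  shows "uniform_limit S (\<lambda>l s. f l) (\<lambda>s. c) F"
proof (rule uniform_limitI)
  fix e :: real assume "e > 0"
  then have "\<forall>\<^sub>F l in F. dist (f l) c < e" using assms tendstoD by blast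
  then show "\<forall>\<^sub>F l in F. \<forall>s\<in>S. dist (f l) c < e" by (rule eventually_mono) simp
qed

lemma cont_bounded: "continuous_on {a..b} (f :: real \<Rightarrow> 'a::real_normed_vector) \<Longrightarrow> bounded (f ` {a..b})"
  by (rule compact_imp_bounded[OF compact_continuous_image[OF _ compact_Icc]])

context ode2
begin

lemma cont_Iint: "l \<noteq> 0 \<Longrightarrow> m \<noteq> 0 \<Longrightarrow> continuous_on {0..p} (\<lambda>s. Iint s l m)"
  unfolding Iint_def by (rule indefinite_integral_continuous_1[OF integrable_continuous_interval[OF cont_integrand]])

definition DQint :: "complex \<Rightarrow> complex \<Rightarrow> real \<Rightarrow> m2" where
  "DQint m l s = (Iint s l m ** C s m) ** W s l l ** adj2 (C s l)
     + C s m ** sc ((l + m) * inverse (l * l * m * m)) (G s) ** adj2 (C s l)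
     + C s m ** W s m m ** adj2 (Iint s l m ** C s m)"

definition Lint :: "complex \<Rightarrow> real \<Rightarrow> m2" where
  "Lint m s = (Iint s m m ** C s m) ** W s m m ** adj2 (C s m)
     + C s m ** sc (2 * inverse (m * m * m)) (G s) ** adj2 (C s m)
     + C s m ** W s m m ** adj2 (Iint s m m ** C s m)"

lemma sc_add: "sc c (A + B) = sc c A + sc c B" and adj2_sc: "adj2 (sc c A) = sc c (adj2 A)"
  by (rule m2_eqI; simp add: algebra_simps)+

lemma telescope3: "(A::m2) ** (B::m2) ** (D::m2) - (A'::m2) ** (B'::m2) ** (D'::m2) = (A - A') ** B ** D + A' ** (B - B') ** D + A' ** B' ** (D - D')"
  by (simp add: mm_simps algebra_simps)

lemma DQ_id:
  assumes l: "l \<noteq> 0" and m: "m \<noteq> 0" and s: "0 \<le> s"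
  shows "C s l ** W s l l ** adj2 (C s l) - C s m ** W s m m ** adj2 (C s m) = sc (l - m) (DQint m l s)"
proof -
  have c: "C s l - C s m = sc (l - m) (Iint s l m ** C s m)" using var_id[OF l m s] .
  have w: "W s l l - W s m m = sc (l - m) (sc ((l + m) * inverse (l * l * m * m)) (G s))"
    unfolding Wf_def by (rule m2_eqI; simp add: field_simps l m; simp add: algebra_simps power2_eq_square)
  have a: "adj2 (C s l) - adj2 (C s m) = sc (l - m) (adj2 (Iint s l m ** C s m))"
    by (simp only: adj2_simps(2)[symmetric] c adj2_sc)
  show ?thesis
    unfolding DQint_def telescope3[of "C s l"] c w a
    by (simp only: sc_pull sc_add)
qed

lemma contDQ: "l \<noteq> 0 \<Longrightarrow> m \<noteq> 0 \<Longrightarrow> continuous_on {0..p} (DQint m l)"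
  unfolding DQint_def by (intro continuous_intros contC cont_Iint contW contG')

lemma contL: "m \<noteq> 0 \<Longrightarrow> continuous_on {0..p} (Lint m)"
  unfolding Lint_def by (intro continuous_intros contC cont_Iint contW contG')

lemma unif_DQ0:
  assumes m: "m \<noteq> 0"
  shows "uniform_limit {0..p} (\<lambda>l s. DQint m l s) (Lint m) (at m)"
proof -
  let ?S = "{0..p}"
  have bC: "bounded ((\<lambda>s. C s m) ` ?S)" by (rule cont_bounded[OF contC[OF m]])
  have bI: "bounded ((\<lambda>s. Iint s m m) ` ?S)" by (rule cont_bounded[OF cont_Iint[OF m m]])
  have bIC: "bounded ((\<lambda>s. Iint s m m ** C s m) ` ?S)" by (rule cont_bounded) (intro continuous_intros contC cont_Iint m)
  have bW: "bounded ((\<lambda>s. W s m m) ` ?S)" by (rule cont_bounded[OF contW])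
  have bG: "bounded ((\<lambda>s. G s) ` ?S)" by (rule cont_bounded[OF contG'])
  have bA: "bounded ((\<lambda>s. adj2 (C s m)) ` ?S)" by (rule cont_bounded) (intro continuous_intros contC m)
  have bIA: "bounded ((\<lambda>s. adj2 (Iint s m m ** C s m)) ` ?S)" by (rule cont_bounded) (intro continuous_intros contC cont_Iint m)
  have bICW: "bounded ((\<lambda>s. Iint s m m ** C s m ** W s m m) ` ?S)" by (rule cont_bounded) (intro continuous_intros contC cont_Iint contW m)
  have bsG: "bounded ((\<lambda>s. sc (2 * inverse (m * m * m)) (G s)) ` ?S)" by (rule cont_bounded) (intro continuous_intros contG')
  have bCsG: "bounded ((\<lambda>s. C s m ** sc (2 * inverse (m * m * m)) (G s)) ` ?S)" by (rule cont_bounded) (intro continuous_intros contC contG' m)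
  have bCW: "bounded ((\<lambda>s. C s m ** W s m m) ` ?S)" by (rule cont_bounded) (intro continuous_intros contC contW m)
  have bconst: "bounded ((\<lambda>s. c) ` ?S)" for c :: complex by (rule cont_bounded) (intro continuous_intros)
  have U1: "uniform_limit ?S (\<lambda>l s. Iint s l m ** C s m) (\<lambda>s. Iint s m m ** C s m) (at m)"
    by (rule bounded_bilinear.bounded_uniform_limit[OF bb_mm unif_I[OF m] uniform_limit_const bC bI])
  have U2: "uniform_limit ?S (\<lambda>l s. W s l l) (\<lambda>s. W s m m) (at m)"
  proof -
    have "((\<lambda>l. inverse (l * l)) \<longlongrightarrow> inverse (m * m)) (at m)"
      using m by (intro tendsto_intros) auto
    then have "uniform_limit ?S (\<lambda>l s. sc (inverse (l * l)) (G s)) (\<lambda>s. sc (inverse (m * m)) (G s)) (at m)"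
      by (intro bounded_bilinear.bounded_uniform_limit[OF bb_sc] uniform_limit_const_fun uniform_limit_const bG bconst)
    then show ?thesis unfolding Wf_def by (intro uniform_limit_intros)
  qed
  have U3: "uniform_limit ?S (\<lambda>l s. adj2 (C s l)) (\<lambda>s. adj2 (C s m)) (at m)"
    by (rule bounded_linear.uniform_limit[OF bl_adj2 unif_C[OF m]])
  have U4: "uniform_limit ?S (\<lambda>l s. sc ((l + m) * inverse (l * l * m * m)) (G s)) (\<lambda>s. sc (2 * inverse (m * m * m)) (G s)) (at m)"
  proof -
    have "((\<lambda>l. (l + m) * inverse (l * l * m * m)) \<longlongrightarrow> (m + m) * inverse (m * m * m * m)) (at m)"
      using m by (intro tendsto_intros) auto
    moreover have "(m + m) * inverse (m * m * m * m) = 2 * inverse (m * m * m)" using m by (simp add: field_simps)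
    ultimately have "((\<lambda>l. (l + m) * inverse (l * l * m * m)) \<longlongrightarrow> 2 * inverse (m * m * m)) (at m)" by (simp only:)
    then show ?thesis
      by (intro bounded_bilinear.bounded_uniform_limit[OF bb_sc] uniform_limit_const_fun uniform_limit_const bG bconst)
  qed
  have U5: "uniform_limit ?S (\<lambda>l s. adj2 (Iint s l m ** C s m)) (\<lambda>s. adj2 (Iint s m m ** C s m)) (at m)"
    by (rule bounded_linear.uniform_limit[OF bl_adj2 U1])
  have T1: "uniform_limit ?S (\<lambda>l s. (Iint s l m ** C s m) ** W s l l ** adj2 (C s l)) (\<lambda>s. (Iint s m m ** C s m) ** W s m m ** adj2 (C s m)) (at m)"
    by (intro bounded_bilinear.bounded_uniform_limit[OF bb_mm] U1 U2 U3 bIC bW bA bICW)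
  have T2: "uniform_limit ?S (\<lambda>l s. C s m ** sc ((l + m) * inverse (l * l * m * m)) (G s) ** adj2 (C s l)) (\<lambda>s. C s m ** sc (2 * inverse (m * m * m)) (G s) ** adj2 (C s m)) (at m)"
    by (intro bounded_bilinear.bounded_uniform_limit[OF bb_mm] U4 U3 uniform_limit_const bC bsG bA bCsG)
  have T3: "uniform_limit ?S (\<lambda>l s. C s m ** W s m m ** adj2 (Iint s l m ** C s m)) (\<lambda>s. C s m ** W s m m ** adj2 (Iint s m m ** C s m)) (at m)"
    by (intro bounded_bilinear.bounded_uniform_limit[OF bb_mm] U5 uniform_limit_const bIA bCW)
  show ?thesis unfolding DQint_def Lint_def
    by (intro uniform_limit_add T1 T2 T3)
qed

lemma dJ:
  assumes m: "m \<noteq> 0"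
  shows "((\<lambda>l. Iint p l l $ i $ j) has_field_derivative (integral {0..p} (Lint m)) $ i $ j) (at m)"
proof -
  define f where "f l = (if l = 0 then Lint m else DQint m l)" for l
  have U: "uniform_limit {0..p} f (Lint m) (at m)"
  proof -
    have "\<forall>\<^sub>F l in at m. \<forall>s\<in>{0..p}. DQint m l s = f l s"
      using near_nonzero[OF m] by (rule eventually_mono) (auto simp: f_def)
    then have "uniform_limit {0..p} (\<lambda>l s. DQint m l s) (Lint m) (at m) \<longleftrightarrow> uniform_limit {0..p} f (Lint m) (at m)"
      by (rule uniform_limit_cong) simp
    then show ?thesis using unif_DQ0[OF m] by simp
  qed
  have cf: "continuous_on {0..p} (f l)" for l
    using contDQ[OF _ m, of l] contL[OF m] by (cases "l = 0") (auto simp: f_def)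
  obtain I J where I: "\<And>l. (f l has_integral I l) {0..p}" and J: "(Lint m has_integral J) {0..p}" and IJ: "(I \<longlongrightarrow> J) (at m)"
    using uniform_limit_integral[OF U cf] by auto
  have Jeq: "J = integral {0..p} (Lint m)" using J by (simp add: integral_unique)
  have lim: "((\<lambda>l. I l $ i $ j) \<longlongrightarrow> integral {0..p} (Lint m) $ i $ j) (at m)"
    unfolding Jeq[symmetric] by (intro tendsto_vec_nth IJ)
  have ev: "\<forall>\<^sub>F l in at m. I l $ i $ j = (Iint p l l $ i $ j - Iint p m m $ i $ j) / (l - m)"
    using near_nonzero[OF m]
  proof (rule eventually_mono)
    fix l assume l: "l \<noteq> 0 \<and> l \<noteq> m"
    have Il: "I l = integral {0..p} (DQint m l)" using I[of l] l by (simp add: f_def integral_unique)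
    have "Iint p l l - Iint p m m = integral {0..p} (\<lambda>s. C s l ** W s l l ** adj2 (C s l) - C s m ** W s m m ** adj2 (C s m))"
      unfolding Iint_def
      by (rule integral_diff[symmetric]; rule integrable_continuous_interval; rule cont_integrand; use l m in simp)
    also have "\<dots> = integral {0..p} (\<lambda>s. sc (l - m) (DQint m l s))"
      by (rule integral_cong) (use DQ_id l m in auto)
    also have "\<dots> = sc (l - m) (I l)"
    proof -
      have cd: "continuous_on {0..p} (DQint m l)" using contDQ l m by auto
      show ?thesis unfolding Il using integral_linear[OF integrable_continuous_interval[OF cd] bl_sc[of "l - m"]]
        by (simp add: o_def)
    qed
    finally have "Iint p l l $ i $ j - Iint p m m $ i $ j = (l - m) * I l $ i $ j"
      by (metis m2_diff_nth sc_nth)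
    then show "I l $ i $ j = (Iint p l l $ i $ j - Iint p m m $ i $ j) / (l - m)" using l by simp
  qed
  show ?thesis unfolding has_field_derivative_iff
    by (rule Lim_transform_eventually[OF lim ev])
qed

end





lemma matrix_inv_eq:
  fixes A B :: m2
  assumes "A ** B = mat 1" "B ** A = mat 1"
  shows "matrix_inv A = B"
proof -
  have "A ** matrix_inv A = mat 1 \<and> matrix_inv A ** A = mat 1"
    unfolding matrix_inv_def by (rule someI[of _ B]) (use assms in simp)
  then have "matrix_inv A = matrix_inv A ** (A ** B)" using assms by (simp add: matrix_mul_rid)
  also have "\<dots> = B" using \<open>A ** matrix_inv A = mat 1 \<and> matrix_inv A ** A = mat 1\<close>
    by (simp add: matrix_mul_assoc matrix_mul_lid)
  finally show ?thesis .
qed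

lemma mderiv_nth: "mderiv MM l $ i $ j = deriv (\<lambda>m. MM m $ i $ j) l"
  by (simp add: mderiv_def)

context ode2
begin

lemma C_unique:
  assumes d: "\<And>t. (G0 has_vector_derivative (G0 t ** Z t 1)) (at t)" and G00: "G0 0 = mat 1"
    and det: "\<And>t. det2 (G0 t) = 1"
  shows "C t 1 = G0 t"
proof -
  define R where "R s = C s 1 ** adj2 (G0 s)" for s
  have "(R has_vector_derivative 0) (at s within UNIV)" for s
  proof -
    have "((\<lambda>s. adj2 (G0 s)) has_vector_derivative adj2 (G0 s ** Z s 1)) (at s)"
      by (rule bounded_linear.has_vector_derivative[OF bl_adj2 d])
    then have "(R has_vector_derivative (C s 1 ** adj2 (G0 s ** Z s 1) + C s 1 ** Z s 1 ** adj2 (G0 s))) (at s)"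
      unfolding R_def by (intro has_vector_derivative_mm C_deriv) auto
    moreover have "C s 1 ** adj2 (G0 s ** Z s 1) + C s 1 ** Z s 1 ** adj2 (G0 s) = 0"
      by (simp add: adj2_mult adj2_traceless[OF trZ] mm_simps matrix_mul_assoc)
    ultimately show ?thesis by simp
  qed
  then obtain c where "\<And>x. x \<in> UNIV \<Longrightarrow> R x = c"
    using has_vector_derivative_zero_constant[of UNIV R] by auto
  then have "R t = R 0" by simp
  also have "R 0 = mat 1" using C_0[of 1] G00 by (simp add: R_def adj2_simps matrix_mul_lid)
  finally have Rt: "R t = mat 1" .
  have "C t 1 = R t ** G0 t" unfolding R_def using det[of t]
    by (simp add: matrix_mul_assoc[symmetric] adj2_mm matrix_mul_rid)
  then show ?thesis using Rt by (simp add: matrix_mul_lid)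
qed

lemma mderiv_C:
  assumes m: "m \<noteq> 0"
  shows "mderiv (\<lambda>l. C p l) m = Iint p m m ** C p m"
  unfolding mderiv_def
proof (rule m2_eqI)
  have "deriv (\<lambda>l. C p l $ i $ j) m = (Iint p m m ** C p m) $ i $ j" for i j
    by (rule DERIV_imp_deriv[OF dC[OF m]]) (use p_pos in auto)
  then show "(\<chi> i j. deriv (\<lambda>m. C p m $ i $ j) m) $ 1 $ 1 = (Iint p m m ** C p m) $ 1 $ 1"
    "(\<chi> i j. deriv (\<lambda>m. C p m $ i $ j) m) $ 1 $ 2 = (Iint p m m ** C p m) $ 1 $ 2"
    "(\<chi> i j. deriv (\<lambda>m. C p m $ i $ j) m) $ 2 $ 1 = (Iint p m m ** C p m) $ 2 $ 1"
    "(\<chi> i j. deriv (\<lambda>m. C p m $ i $ j) m) $ 2 $ 2 = (Iint p m m ** C p m) $ 2 $ 2"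
    by simp_all
qed

lemma P_eq: assumes m: "m \<noteq> 0" shows "mderiv (\<lambda>l. C p l) m ** matrix_inv (C p m) = Iint p m m"
proof -
  have "matrix_inv (C p m) = adj2 (C p m)" by (rule matrix_inv_eq[OF C_adj[OF m] adj_C[OF m]])
  then show ?thesis using C_adj[OF m]
    by (simp add: mderiv_C[OF m] matrix_mul_assoc[symmetric] matrix_mul_rid)
qed

lemma X_formula: "Xmat (\<lambda>l. C p l) 1 $ i $ j = - \<i> * Iint p 1 1 $ i $ j"
  unfolding Xmat_def using P_eq[of 1] by simp

lemma Y_formula: "Ymat (\<lambda>l. C p l) 1 $ i $ j = - (1/2) * (Iint p 1 1 $ i $ j + integral {0..p} (Lint 1) $ i $ j)"
proof -
  have D: "((\<lambda>m. m * Iint p m m $ i $ j) has_field_derivative (1 * Iint p 1 1 $ i $ j + 1 * integral {0..p} (Lint 1) $ i $ j)) (at 1)"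
    using DERIV_mult[OF DERIV_ident dJ[of 1 i j]] by simp
  have D2: "((\<lambda>m. (\<chi> r s. m * (mderiv (\<lambda>l. C p l) m ** matrix_inv (C p m)) $ r $ s) $ i $ j) has_field_derivative (1 * Iint p 1 1 $ i $ j + 1 * integral {0..p} (Lint 1) $ i $ j)) (at 1)"
  proof (rule has_field_derivative_transform_within_open[OF D, of "- {0}"])
    show "open (- {0 :: complex})" by auto
    show "(1::complex) \<in> - {0}" by simp
    fix m :: complex assume "m \<in> - {0}"
    then show "m * Iint p m m $ i $ j = (\<chi> r s. m * (mderiv (\<lambda>l. C p l) m ** matrix_inv (C p m)) $ r $ s) $ i $ j"
      using P_eq[of m] by simp
  qed
  have "Ymat (\<lambda>l. C p l) 1 $ i $ j = (- (1/2) * 1) * deriv (\<lambda>m. (\<chi> r s. m * (mderiv (\<lambda>l. C p l) m ** matrix_inv (C p m)) $ r $ s) $ i $ j) 1"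
    unfolding Ymat_def by (simp only: vec_lambda_beta mderiv_nth)
  then show ?thesis using DERIV_imp_deriv[OF D2] by (simp only:) simp
qed

end





lemma cont_nth: "continuous_on S f \<Longrightarrow> continuous_on S (\<lambda>s. (f s :: m2) $ i $ j)"
  by (rule bounded_linear.continuous_on[OF bl_m2_nth])

lemma tr_conj: "tr2 (A ** B ** adj2 A) = det2 A * tr2 B"
  by (simp add: tr2_def det2_def algebra_simps)

context ode2
begin

definition P1 :: "real \<Rightarrow> m2" where "P1 s = C s 1 ** W s 1 1 ** adj2 (C s 1)"

lemma contP1: "continuous_on S P1"
  unfolding P1_def by (intro continuous_intros contC contW) simp_all

lemma trP1: "tr2 (P1 s) = 0"
proof -
  have "tr2 (W s 1 1) = 0" by (simp add: Wf_def tr2_simps trF trG)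
  then show ?thesis by (simp add: P1_def tr_conj)
qed

lemma Iint_nth: "l \<noteq> 0 \<Longrightarrow> m \<noteq> 0 \<Longrightarrow> Iint s l m $ i $ j = integral {0..s} (\<lambda>u. (C u l ** W u l m ** adj2 (C u m)) $ i $ j)"
  unfolding Iint_def
  using integral_linear[OF integrable_continuous_interval[OF cont_integrand] bl_m2_nth, of l m 0 s i j]
  by (simp add: o_def)

lemma Q_nth: "Iint s 1 1 $ i $ j = integral {0..s} (\<lambda>u. P1 u $ i $ j)"
  using Iint_nth[of 1 1 s i j] by (simp add: P1_def)

lemma trQ: "tr2 (Iint s 1 1) = 0"
proof -
  have "tr2 (Iint s 1 1) = integral {0..s} (\<lambda>u. P1 u $ 1 $ 1) + integral {0..s} (\<lambda>u. P1 u $ 2 $ 2)"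
    by (simp add: tr2_def Q_nth)
  also have "\<dots> = integral {0..s} (\<lambda>u. P1 u $ 1 $ 1 + P1 u $ 2 $ 2)"
    by (rule integral_add[symmetric]; rule integrable_continuous_interval; intro cont_nth contP1)
  also have "\<dots> = 0" using trP1 by (simp add: tr2_def)
  finally show ?thesis .
qed

definition Hm :: "real \<Rightarrow> m2" where "Hm s = C s 1 ** G s ** adj2 (C s 1)"

lemma contHm: "continuous_on S Hm"
  unfolding Hm_def by (intro continuous_intros contC contG') simp_all

lemma trHm: "tr2 (Hm s) = 0"
  by (simp add: Hm_def tr_conj trG)

lemma Lint_eq: "Lint 1 s = Iint s 1 1 ** P1 s + P1 s ** adj2 (Iint s 1 1) + sc 2 (Hm s)"
  unfolding Lint_def P1_def Hm_def
  by (simp add: matrix_mul_assoc adj2_mult sc_pull algebra_simps)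

lemma Lint11: "Lint 1 s $ 1 $ 1 = Iint s 1 1 $ 1 $ 2 * P1 s $ 2 $ 1 - P1 s $ 1 $ 2 * Iint s 1 1 $ 2 $ 1 + 2 * Hm s $ 1 $ 1"
proof -
  have "Iint s 1 1 $ 2 $ 2 = - Iint s 1 1 $ 1 $ 1" using trQ[of s] by (simp add: tr2_def add_eq_0_iff)
  then show ?thesis unfolding Lint_eq by (simp add: algebra_simps)
qed

lemma Lint22: "Lint 1 s $ 2 $ 2 = - Lint 1 s $ 1 $ 1"
proof -
  have "Iint s 1 1 $ 2 $ 2 = - Iint s 1 1 $ 1 $ 1" using trQ[of s] by (simp add: tr2_def add_eq_0_iff)
  moreover have "P1 s $ 2 $ 2 = - P1 s $ 1 $ 1" using trP1[of s] by (simp add: tr2_def add_eq_0_iff)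
  moreover have "Hm s $ 2 $ 2 = - Hm s $ 1 $ 1" using trHm[of s] by (simp add: tr2_def add_eq_0_iff)
  ultimately show ?thesis unfolding Lint_eq by (simp add: algebra_simps)
qed

lemma contLint1: "continuous_on {0..p} (\<lambda>s. Lint 1 s $ i $ j)"
  by (intro cont_nth contL) simp

lemma intL_nth: "integral {0..p} (Lint 1) $ i $ j = integral {0..p} (\<lambda>s. Lint 1 s $ i $ j)"
proof -
  have c: "continuous_on {0..p} (Lint 1)" by (rule contL) simp
  show ?thesis using integral_linear[OF integrable_continuous_interval[OF c] bl_m2_nth, of i j]
    by (simp add: o_def)
qed

lemma Y11: "Ymat (\<lambda>l. C p l) 1 $ 1 $ 1 = - (1/2) * integral {0..p} (\<lambda>s. P1 s $ 1 $ 1 + Lint 1 s $ 1 $ 1)"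
proof -
  have "integral {0..p} (\<lambda>s. P1 s $ 1 $ 1 + Lint 1 s $ 1 $ 1) = integral {0..p} (\<lambda>s. P1 s $ 1 $ 1) + integral {0..p} (\<lambda>s. Lint 1 s $ 1 $ 1)"
    by (rule integral_add; rule integrable_continuous_interval; intro cont_nth contP1 contLint1)
  then show ?thesis by (simp add: Y_formula Q_nth intL_nth)
qed

lemma Y22: "Ymat (\<lambda>l. C p l) 1 $ 2 $ 2 = - Ymat (\<lambda>l. C p l) 1 $ 1 $ 1"
proof -
  have "Iint p 1 1 $ 2 $ 2 = - Iint p 1 1 $ 1 $ 1" using trQ[of p] by (simp add: tr2_def add_eq_0_iff)
  moreover have "integral {0..p} (Lint 1) $ 2 $ 2 = - integral {0..p} (Lint 1) $ 1 $ 1"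
    by (simp add: intL_nth Lint22 integral_neg)
  ultimately show ?thesis by (simp add: Y_formula algebra_simps)
qed

end





lemma refl_real: "refl_fun f (of_real t) = cnj (f (of_real t))"
  by (simp add: refl_fun_def)

lemma deriv_refl_real:
  assumes "f field_differentiable (at (of_real t))"
  shows "deriv (refl_fun f) (of_real t) = cnj (deriv f (of_real t))"
proof -
  have e: "refl_fun f = cnj \<circ> f \<circ> cnj" by (simp add: fun_eq_iff refl_fun_def)
  have "(f has_field_derivative deriv f (cnj (of_real t))) (at (cnj (of_real t)))"
    using assms by (simp add: DERIV_deriv_iff_field_differentiable)
  from has_field_derivative_cnj_cnj[OF this] show ?thesis
    unfolding e by (intro DERIV_imp_deriv) simp
qed

lemma cont_if_const: "continuous_on S f \<Longrightarrow> continuous_on S g \<Longrightarrow> continuous_on S (\<lambda>x. if c then f x else g x)"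
  by (cases c) auto

lemma m2_cont_intro: "(\<And>i j. continuous_on S (\<lambda>x. f x i j)) \<Longrightarrow> continuous_on S (\<lambda>x. \<chi> i j. f x i j :: m2)"
  by (intro continuous_on_vec_lambda)

lemma integral_cof:
  assumes "f integrable_on S"
  shows "integral S (\<lambda>x. c * complex_of_real (f x)) = c * of_real (integral S f)"
proof -
  have "((\<lambda>x. complex_of_real (f x)) has_integral of_real (integral S f)) S"
    by (rule has_integral_of_real[OF integrable_integral[OF assms]])
  from has_integral_mult_right[OF this, of c] show ?thesis by (rule integral_unique)
qed

lemma m2_chi_nth[simp]:
  "(\<chi> i j. if i = 1 \<and> j = 1 then a else if i = 1 \<and> j = 2 then b else if i = 2 \<and> j = 1 then c else d :: m2) $ 1 $ 1 = a"
  "(\<chi> i j. if i = 1 \<and> j = 1 then a else if i = 1 \<and> j = 2 then b else if i = 2 \<and> j = 1 then c else d :: m2) $ 1 $ 2 = b"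
  "(\<chi> i j. if i = 1 \<and> j = 1 then a else if i = 1 \<and> j = 2 then b else if i = 2 \<and> j = 1 then c else d :: m2) $ 2 $ 1 = c"
  "(\<chi> i j. if i = 1 \<and> j = 1 then a else if i = 1 \<and> j = 2 then b else if i = 2 \<and> j = 1 then c else d :: m2) $ 2 $ 2 = d"
  by simp_all

definition mk2 :: "complex \<Rightarrow> complex \<Rightarrow> complex \<Rightarrow> complex \<Rightarrow> m2" where
  "mk2 a b c d = (\<chi> i j. if i = 1 \<and> j = 1 then a else if i = 1 \<and> j = 2 then b else if i = 2 \<and> j = 1 then c else d)"

lemma mk2_nth[simp]: "mk2 a b c d $ 1 $ 1 = a" "mk2 a b c d $ 1 $ 2 = b" "mk2 a b c d $ 2 $ 1 = c" "mk2 a b c d $ 2 $ 2 = d"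
  by (simp_all add: mk2_def)

lemma cont_mk2: "continuous_on S a \<Longrightarrow> continuous_on S b \<Longrightarrow> continuous_on S c \<Longrightarrow> continuous_on S d \<Longrightarrow>
  continuous_on S (\<lambda>x. mk2 (a x) (b x) (c x) (d x))"
  unfolding mk2_def by (intro m2_cont_intro cont_if_const)

theorem proposition2p4:
  fixes p :: real and D :: "complex set"
    and a0 b0 h :: "complex \<Rightarrow> complex"
    and C :: "complex \<Rightarrow> complex \<Rightarrow> complex^2^2"
  assumes "p > 0"
    and "open D" and "connected D" and "\<real> \<subseteq> D"
    and "cnj ` D = D" and "(\<lambda>z. z + of_real p) ` D = D"
    and "a0 holomorphic_on D" and "b0 holomorphic_on D"
    and "\<forall>z\<in>D. a0 (z + of_real p) = a0 z" and "\<forall>z\<in>D. b0 (z + of_real p) = b0 z"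
    and "\<forall>z\<in>D. a0 z * refl_fun a0 z - b0 z * refl_fun b0 z = 1"
    and "a0 0 = 1" and "b0 0 = 0"
    and "h meromorphic_on D" and "h analytic_on \<real>"
    and "\<forall>z\<in>D. h (z + of_real p) = h z"
    and "\<forall>l. l \<noteq> 0 \<longrightarrow> C 0 l = mat 1"
    and "\<forall>l. l \<noteq> 0 \<longrightarrow> (\<forall>t::real.
           ((\<lambda>s. C (of_real s) l) has_vector_derivative
              (C (of_real t) l ** zeta a0 b0 h (of_real t) l)) (at t))"
  shows "((Xmat (\<lambda>l. C (of_real p) l) 1 $ 1 $ 2 = 0 \<and> Xmat (\<lambda>l. C (of_real p) l) 1 $ 2 $ 1 = 0)
            \<longleftrightarrow> integral {0..p} (alpha a0 b0 h) = 0)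
       \<and> ((Ymat (\<lambda>l. C (of_real p) l) 1 $ 1 $ 1 = 0 \<and> Ymat (\<lambda>l. C (of_real p) l) 1 $ 2 $ 2 = 0)
            \<longleftrightarrow> integral {0..p} (\<lambda>t. Im (alpha a0 b0 h t * integral {0..t} (\<lambda>s. cnj (alpha a0 b0 h s))))
                = integral {0..p} (\<lambda>t. Im (a0 (of_real t) * cnj (b0 (of_real t)) * kappa a0 b0 (of_real t))))"
proof -
  have RD: "complex_of_real t \<in> D" for t using assms(4) by auto
  have dA: "(a0 has_field_derivative deriv a0 (of_real t)) (at (of_real t))" for t
    by (rule holomorphic_derivI[OF assms(7) assms(2) RD])
  have dB: "(b0 has_field_derivative deriv b0 (of_real t)) (at (of_real t))" for t
    by (rule holomorphic_derivI[OF assms(8) assms(2) RD])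
  define A where "A t = a0 (complex_of_real t)" for t
  define B where "B t = b0 (complex_of_real t)" for t
  define A' where "A' t = deriv a0 (complex_of_real t)" for t
  define B' where "B' t = deriv b0 (complex_of_real t)" for t
  define H where "H t = h (complex_of_real t)" for t
  define K where "K t = kappa a0 b0 (complex_of_real t)" for t
  define N where "N t = nu a0 b0 (complex_of_real t)" for t
  have K_eq: "K t = cnj (A t) * B' t - B t * cnj (A' t)" for t
    unfolding K_def kappa_def A_def B_def A'_def B'_def
    using deriv_refl_real[of a0 t] dA[of t] by (auto simp: refl_real field_differentiable_def)
  have N_eq: "N t = cnj (A t) * A' t - B t * cnj (B' t)" for t
    unfolding N_def nu_def A_def B_def A'_def B'_def
    using deriv_refl_real[of b0 t] dB[of t] by (auto simp: refl_real field_differentiable_def)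
  have vA: "(A has_vector_derivative A' t) (at t)" for t
    unfolding A_def A'_def by (rule has_vector_derivative_real_field[OF dA])
  have vB: "(B has_vector_derivative B' t) (at t)" for t
    unfolding B_def B'_def by (rule has_vector_derivative_real_field[OF dB])
  have cRD: "continuous_on UNIV (complex_of_real)" by (intro continuous_intros)
  have ofD: "complex_of_real ` UNIV \<subseteq> D" using RD by auto
  have cA: "continuous_on UNIV A"
    unfolding A_def by (rule continuous_on_compose2[OF holomorphic_on_imp_continuous_on[OF assms(7)] cRD ofD])
  have cB: "continuous_on UNIV B"
    unfolding B_def by (rule continuous_on_compose2[OF holomorphic_on_imp_continuous_on[OF assms(8)] cRD ofD])
  have cA': "continuous_on UNIV A'"
    unfolding A'_def by (rule continuous_on_compose2[OF holomorphic_on_imp_continuous_on[OF holomorphic_deriv[OF assms(7) assms(2)]] cRD ofD])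
  have cB': "continuous_on UNIV B'"
    unfolding B'_def by (rule continuous_on_compose2[OF holomorphic_on_imp_continuous_on[OF holomorphic_deriv[OF assms(8) assms(2)]] cRD ofD])
  have cH: "continuous_on UNIV H"
  proof -
    have hc: "isCont h (of_real t)" for t
      using analytic_on_imp_differentiable_at[OF assms(15), of "of_real t"]
      by (simp add: field_differentiable_imp_continuous_at)
    have oc: "isCont complex_of_real t" for t :: real by (rule continuous_of_real[OF continuous_ident])
    have "isCont (\<lambda>t. h (complex_of_real t)) t" for t by (rule isCont_o2[OF oc hc])
    then show ?thesis unfolding H_def by (intro continuous_at_imp_continuous_on) auto
  qed
  have cK: "continuous_on UNIV K" unfolding K_eq[abs_def] by (intro continuous_intros cA cB cA' cB')
  have cN: "continuous_on UNIV N" unfolding N_eq[abs_def] by (intro continuous_intros cA cB cA' cB')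
  define Em where "Em t = mk2 (N t) 0 0 (- N t)" for t
  define Fm where "Fm t = mk2 0 (K t - H t) (cnj (H t)) 0" for t
  define Gm where "Gm t = mk2 0 (H t) (cnj (K t) - cnj (H t)) 0" for t
  have zeta_eq: "zeta a0 b0 h (of_real t) l = Zf Em Fm Gm t l" for t l
    by (rule m2_eqI) (simp_all add: zeta_def Zf_def Em_def Fm_def Gm_def refl_real N_def K_def H_def)
  interpret O: ode2 p Em Fm Gm "\<lambda>s l. C (of_real s) l"
  proof
    show "p > 0" by (rule assms(1))
    show "continuous_on UNIV Em" unfolding Em_def by (intro cont_mk2 continuous_intros cN)
    show "continuous_on UNIV Fm" unfolding Fm_def by (intro cont_mk2 continuous_intros cK cH)
    show "continuous_on UNIV Gm" unfolding Gm_def by (intro cont_mk2 continuous_intros cK cH)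
    show "tr2 (Em t) = 0" "tr2 (Fm t) = 0" "tr2 (Gm t) = 0" for t by (simp_all add: tr2_def Em_def Fm_def Gm_def)
    show "C (of_real 0) l = mat 1" if "l \<noteq> 0" for l using assms(17) that by simp
    show "((\<lambda>s. C (of_real s) l) has_vector_derivative C (of_real t) l ** Zf Em Fm Gm t l) (at t)" if "l \<noteq> 0" for l t
      using assms(18) that zeta_eq by metis
  qed
  have det: "A t * cnj (A t) - B t * cnj (B t) = 1" for t
    using bspec[OF assms(11) RD[of t]] by (simp add: A_def B_def refl_real)
  have ddet: "A' t * cnj (A t) + A t * cnj (A' t) - (B' t * cnj (B t) + B t * cnj (B' t)) = 0" for t
  proof -
    have "((\<lambda>s. A s * cnj (A s) - B s * cnj (B s)) has_vector_derivative
        (A t * cnj (A' t) + A' t * cnj (A t) - (B t * cnj (B' t) + B' t * cnj (B t)))) (at t)"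
      by (intro has_vector_derivative_diff has_vector_derivative_mult has_vector_derivative_cnj vA vB)
    moreover have "(\<lambda>s. A s * cnj (A s) - B s * cnj (B s)) = (\<lambda>s. 1)" using det by auto
    ultimately have "((\<lambda>s. 1::complex) has_vector_derivative
        (A t * cnj (A' t) + A' t * cnj (A t) - (B t * cnj (B' t) + B' t * cnj (B t)))) (at t)" by simp
    from vector_derivative_unique_at[OF this has_vector_derivative_const] show ?thesis
      by (simp add: algebra_simps)
  qed
  define C0m where "C0m t = mk2 (A t) (B t) (cnj (B t)) (cnj (A t))" for t
  have Z1: "Zf Em Fm Gm t 1 = mk2 (N t) (K t) (cnj (K t)) (- N t)" for t
    by (rule m2_eqI) (simp_all add: Zf_def Em_def Fm_def Gm_def)
  have C0d: "(C0m has_vector_derivative C0m t ** Zf Em Fm Gm t 1) (at t)" for t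
  proof (rule m2_has_vector_derivativeI)
    let ?d = "A t * cnj (A t) - B t * cnj (B t)"
    let ?dd = "A' t * cnj (A t) + A t * cnj (A' t) - (B' t * cnj (B t) + B t * cnj (B' t))"
    have "(C0m t ** Zf Em Fm Gm t 1) $ 1 $ 1 = A' t * ?d"
      by (simp add: Z1 C0m_def N_eq K_eq algebra_simps)
    then have e11: "(C0m t ** Zf Em Fm Gm t 1) $ 1 $ 1 = A' t" using det[of t] by simp
    have "(C0m t ** Zf Em Fm Gm t 1) $ 1 $ 2 = B' t * ?d - B t * ?dd"
      by (simp add: Z1 C0m_def N_eq K_eq algebra_simps)
    then have e12: "(C0m t ** Zf Em Fm Gm t 1) $ 1 $ 2 = B' t" using det[of t] ddet[of t] by simp
    have "(C0m t ** Zf Em Fm Gm t 1) $ 2 $ 1 = cnj (B' t) * ?d"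
      by (simp add: Z1 C0m_def N_eq K_eq algebra_simps)
    then have e21: "(C0m t ** Zf Em Fm Gm t 1) $ 2 $ 1 = cnj (B' t)" using det[of t] by simp
    have "(C0m t ** Zf Em Fm Gm t 1) $ 2 $ 2 = cnj (A' t) * ?d - cnj (A t) * ?dd"
      by (simp add: Z1 C0m_def N_eq K_eq algebra_simps)
    then have e22: "(C0m t ** Zf Em Fm Gm t 1) $ 2 $ 2 = cnj (A' t)" using det[of t] ddet[of t] by simp
    fix i j :: 2
    have "i = 1 \<or> i = 2" "j = 1 \<or> j = 2" by (rule exhaust_2)+
    then show "((\<lambda>x. C0m x $ i $ j) has_vector_derivative (C0m t ** Zf Em Fm Gm t 1) $ i $ j) (at t)"
      using e11 e12 e21 e22 vA[of t] vB[of t] has_vector_derivative_cnj[OF vA[of t]] has_vector_derivative_cnj[OF vB[of t]]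
      by (auto simp: C0m_def)
  qed
  have C0_0: "C0m 0 = mat 1"
    by (rule m2_eqI) (simp_all add: C0m_def A_def B_def assms(12) assms(13))
  have C0_det: "det2 (C0m t) = 1" for t using det[of t] by (simp add: det2_def C0m_def)
  have Ceq: "C (of_real t) 1 = C0m t" for t
    using O.C_unique[of C0m t, OF C0d C0_0 C0_det] by simp
  have W11: "Wf Fm Gm s 1 1 = mk2 0 (K s - 2 * H s) (2 * cnj (H s) - cnj (K s)) 0" for s
    by (rule m2_eqI) (simp_all add: Wf_def Fm_def Gm_def)
  have P1eq: "O.P1 s = C0m s ** mk2 0 (K s - 2 * H s) (2 * cnj (H s) - cnj (K s)) 0 ** adj2 (C0m s)" for s
    by (simp add: O.P1_def Ceq W11)
  have Hm_eq: "O.Hm s = C0m s ** Gm s ** adj2 (C0m s)" for s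
    by (simp add: O.Hm_def Ceq)
  have alpha_eq: "alpha a0 b0 h s = (A s)\<^sup>2 * (2 * H s - K s) + (B s)\<^sup>2 * (2 * cnj (H s) - cnj (K s))" for s
    by (simp add: alpha_def A_def B_def H_def K_def)
  have P12: "O.P1 s $ 1 $ 2 = - alpha a0 b0 h s" for s
    by (simp add: P1eq alpha_eq C0m_def power2_eq_square algebra_simps)
  have P21: "O.P1 s $ 2 $ 1 = cnj (alpha a0 b0 h s)" for s
    by (simp add: P1eq alpha_eq C0m_def power2_eq_square algebra_simps)
  have P11H: "O.P1 s $ 1 $ 1 + 2 * O.Hm s $ 1 $ 1 = cnj (A s * cnj (B s) * K s) - A s * cnj (B s) * K s" for s
    by (simp add: P1eq Hm_eq Gm_def C0m_def algebra_simps)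
  have alpha_fun: "alpha a0 b0 h = (\<lambda>s. (A s)\<^sup>2 * (2 * H s - K s) + (B s)\<^sup>2 * (2 * cnj (H s) - cnj (K s)))"
    by (rule ext) (rule alpha_eq)
  have calpha: "continuous_on S (alpha a0 b0 h)" for S
    unfolding alpha_fun by (intro continuous_intros continuous_on_subset[OF cA] continuous_on_subset[OF cB]
      continuous_on_subset[OF cH] continuous_on_subset[OF cK]) auto
  have ialpha: "alpha a0 b0 h integrable_on {0..s}" for s by (rule integrable_continuous_interval[OF calpha])
  have icalpha: "(\<lambda>u. cnj (alpha a0 b0 h u)) integrable_on {0..s}" for s
    by (rule integrable_continuous_interval) (intro continuous_intros calpha)
  have X12: "Xmat (\<lambda>l. C (of_real p) l) 1 $ 1 $ 2 = \<i> * integral {0..p} (alpha a0 b0 h)"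
    using O.X_formula[of 1 2] by (simp add: O.Q_nth P12)
  have X21: "Xmat (\<lambda>l. C (of_real p) l) 1 $ 2 $ 1 = - \<i> * cnj (integral {0..p} (alpha a0 b0 h))"
    using O.X_formula[of 2 1] by (simp add: O.Q_nth P21 integral_cnj)
  have part1: "(Xmat (\<lambda>l. C (of_real p) l) 1 $ 1 $ 2 = 0 \<and> Xmat (\<lambda>l. C (of_real p) l) 1 $ 2 $ 1 = 0)
            \<longleftrightarrow> integral {0..p} (alpha a0 b0 h) = 0"
    unfolding X12 X21 by simp
  define Ab where "Ab s = integral {0..s} (\<lambda>u. cnj (alpha a0 b0 h u))" for s
  define f where "f s = Im (alpha a0 b0 h s * Ab s) - Im (A s * cnj (B s) * K s)" for s
  have integrand: "O.P1 s $ 1 $ 1 + O.Lint 1 s $ 1 $ 1 = (2 * \<i>) * complex_of_real (f s)" for s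
  proof -
    have q12: "O.Iint s 1 1 $ 1 $ 2 = - cnj (Ab s)"
      by (simp add: O.Q_nth P12 Ab_def integral_cnj)
    have q21: "O.Iint s 1 1 $ 2 $ 1 = Ab s"
      by (simp add: O.Q_nth P21 Ab_def)
    have "O.P1 s $ 1 $ 1 + O.Lint 1 s $ 1 $ 1
        = (O.P1 s $ 1 $ 1 + 2 * O.Hm s $ 1 $ 1) + (alpha a0 b0 h s * Ab s - cnj (alpha a0 b0 h s * Ab s))"
      by (simp add: O.Lint11 q12 q21 P12 P21 algebra_simps)
    also have "\<dots> = (2 * \<i>) * complex_of_real (f s)"
      unfolding P11H complex_diff_cnj f_def
      using complex_diff_cnj[of "A s * cnj (B s) * K s"]
      by (simp add: algebra_simps)
    finally show ?thesis .
  qed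
  have cAb: "continuous_on {0..p} Ab"
    unfolding Ab_def by (rule indefinite_integral_continuous_1[OF icalpha])
  have if1: "(\<lambda>s. Im (alpha a0 b0 h s * Ab s)) integrable_on {0..p}"
    by (rule integrable_continuous_interval) (intro continuous_intros calpha cAb)
  have if2: "(\<lambda>s. Im (A s * cnj (B s) * K s)) integrable_on {0..p}"
    by (rule integrable_continuous_interval)
      (intro continuous_intros continuous_on_subset[OF cA] continuous_on_subset[OF cB] continuous_on_subset[OF cK]; simp)
  have intf: "integral {0..p} f = integral {0..p} (\<lambda>s. Im (alpha a0 b0 h s * Ab s)) - integral {0..p} (\<lambda>s. Im (A s * cnj (B s) * K s))"
    unfolding f_def by (rule integral_diff[OF if1 if2])
  have fint: "f integrable_on {0..p}" unfolding f_def by (rule integrable_diff[OF if1 if2])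
  have Y11: "Ymat (\<lambda>l. C (of_real p) l) 1 $ 1 $ 1 = - \<i> * complex_of_real (integral {0..p} f)"
  proof -
    have "Ymat (\<lambda>l. C (of_real p) l) 1 $ 1 $ 1 = - (1/2) * integral {0..p} (\<lambda>s. (2 * \<i>) * complex_of_real (f s))"
      using O.Y11 by (simp add: integrand)
    also have "\<dots> = - \<i> * complex_of_real (integral {0..p} f)"
      using integral_cof[OF fint, of 1] by simp
    finally show ?thesis .
  qed
  have Y22: "Ymat (\<lambda>l. C (of_real p) l) 1 $ 2 $ 2 = - Ymat (\<lambda>l. C (of_real p) l) 1 $ 1 $ 1"
    by (rule O.Y22)
  have part2: "((Ymat (\<lambda>l. C (of_real p) l) 1 $ 1 $ 1 = 0 \<and> Ymat (\<lambda>l. C (of_real p) l) 1 $ 2 $ 2 = 0)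
            \<longleftrightarrow> integral {0..p} (\<lambda>t. Im (alpha a0 b0 h t * integral {0..t} (\<lambda>s. cnj (alpha a0 b0 h s))))
                = integral {0..p} (\<lambda>t. Im (a0 (of_real t) * cnj (b0 (of_real t)) * kappa a0 b0 (of_real t))))"
  proof -
    have "(Ymat (\<lambda>l. C (of_real p) l) 1 $ 1 $ 1 = 0 \<and> Ymat (\<lambda>l. C (of_real p) l) 1 $ 2 $ 2 = 0)
        \<longleftrightarrow> integral {0..p} f = 0"
      unfolding Y22 Y11 by simp
    also have "\<dots> \<longleftrightarrow> integral {0..p} (\<lambda>s. Im (alpha a0 b0 h s * Ab s)) = integral {0..p} (\<lambda>s. Im (A s * cnj (B s) * K s))"
      unfolding intf by simp
    finally show ?thesis by (simp add: Ab_def A_def B_def K_def)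
  qed
  show ?thesis using part1 part2 by blast
qed



end
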